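(* Under the standing setup (assumptions (A1)–(A4)), let $(U_n)_n$ be the first-come-first-served process. (a) If $r<\mu$, then $q_U=1$. (b) If $r>\mu$, then $q_U<1$, and moreover $\mathrm P[\lim_nU_n=0\mid U_0=L]\to0$ as $L\to\infty$.
   Context: Standing setup. On a probability space $(\Omega,\mathcal F,\mathrm P)$ there are three mutually independent double arrays $(D_n^k)_{n\ge0,k\ge1}$, $(X_n^k)_{n\ge0,k\ge1}$, $(R_n^k)_{n\ge0,k\ge1}$, each consisting of i.i.d. random variables: $D_n^k\in\{0,1,2,\dots\}$ with law $p_j=\mathrm P[D_n^k=j]$ and mean $m$; $X_n^k\ge0$ real-valued with continuous distribution function $F$ and mean $\mu$; $R_n^k\ge0$ real-valued with mean $r$. Standing assumptions: (A1) $1<m<\infty$, $r<\infty$, $0<\mu<\infty$; (A2) $p_0>0$ and $p_k>0$ for some $k\ge2$; (A3) for the process under consideration started at $1$, every finite positive state is reached with positive probability; (A4) $D_n^k,X_n^k,R_n^k$ have finite variances. Write $D_n(k)=\sum_{j=1}^kD_n^j$, $R_n(k)=\sum_{j=1}^kR_n^j$. The fcfs counting function is $C(0,\varnothing,s)=0$ and, for $t\ge1$, $C(t,(x_k)_{k=1}^t,s)=0$ if $x_1>s$, otherwise $\max\{1\le k\le t:\sum_{j=1}^kx_j\le s\}$ (claims served in their given order). The fcfs-process started at $L$ is $U_0=L$, $U_{n+1}=C\big(D_n(U_n),(X_n^k)_{k=1}^{D_n(U_n)},R_n(U_n)\big)$; unless stated $U_0=1$. $q_U=\mathrm P[\lim_nU_n=0\mid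 U_0=1]$. *)

theory Defs
  imports "HOL-Probability.Probability"
begin

text \<open>The fcfs counting function C(t, (x_k)_{k=1..t}, s). The sequence is given as a
function x :: nat => real of which only the values x 1, ..., x t are used.\<close>
definition fcfs_count :: "nat \<Rightarrow> (nat \<Rightarrow> real) \<Rightarrow> real \<Rightarrow> nat" where
  "fcfs_count t x s =
     (if t = 0 then 0
      else if x 1 > s then 0
      else Max {k \<in> {1..t}. (\<Sum>j=1..k. x j) \<le> s})"

primrec fcfs_proc ::
  "(nat \<Rightarrow> nat \<Rightarrow> 'a \<Rightarrow> nat) \<Rightarrow> (nat \<Rightarrow> nat \<Rightarrow> 'a \<Rightarrow> real) \<Rightarrow> (nat \<Rightarrow> nat \<Rightarrow> 'a \<Rightarrow> real)
    \<Rightarrow> nat \<Rightarrow> nat \<Rightarrow> 'a \<Rightarrow> nat" where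
  "fcfs_proc D X R L 0 \<omega> = L"
| "fcfs_proc D X R L (Suc n) \<omega> =
     fcfs_count (\<Sum>j=1..fcfs_proc D X R L n \<omega>. D n j \<omega>)
                (\<lambda>k. X n k \<omega>)
                (\<Sum>j=1..fcfs_proc D X R L n \<omega>. R n j \<omega>)"

definition fcfs_ext_prob ::
  "'a measure \<Rightarrow> (nat \<Rightarrow> nat \<Rightarrow> 'a \<Rightarrow> nat) \<Rightarrow> (nat \<Rightarrow> nat \<Rightarrow> 'a \<Rightarrow> real) \<Rightarrow> (nat \<Rightarrow> nat \<Rightarrow> 'a \<Rightarrow> real)
    \<Rightarrow> nat \<Rightarrow> real" where
  "fcfs_ext_prob M D X R L =
     measure M {\<omega> \<in> space M. (\<lambda>n. fcfs_proc D X R L n \<omega>) \<longlonglongrightarrow> 0}"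

end

theory Submission
  imports Defs
begin

type_synonym idx = "(nat \<times> nat) + (nat \<times> nat) + (nat \<times> nat)"

definition Dv :: "nat \<Rightarrow> nat \<Rightarrow> (idx \<Rightarrow> real) \<Rightarrow> nat" where
  "Dv a b v = nat \<lfloor>v (Inl (a,b))\<rfloor>"
definition Xv :: "nat \<Rightarrow> nat \<Rightarrow> (idx \<Rightarrow> real) \<Rightarrow> real" where
  "Xv a b v = v (Inr (Inl (a,b)))"
definition Rv :: "nat \<Rightarrow> nat \<Rightarrow> (idx \<Rightarrow> real) \<Rightarrow> real" where
  "Rv a b v = v (Inr (Inr (a,b)))"

lemma fcfs_count_cong:
  assumes "\<And>k. k \<in> {1..t} \<Longrightarrow> x k = y k"
  shows "fcfs_count t x s = fcfs_count t y s"
proof (cases "t = 0")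
  case True thus ?thesis by (simp add: fcfs_count_def)
next
  case False
  hence "x 1 = y 1" using assms by auto
  moreover have "{k \<in> {1..t}. (\<Sum>j=1..k. x j) \<le> s} = {k \<in> {1..t}. (\<Sum>j=1..k. y j) \<le> s}"
    using assms by (auto intro!: sum.cong)
  ultimately show ?thesis by (simp add: fcfs_count_def)
qed

lemma proc_cong:
  assumes "\<And>a b. a < n \<Longrightarrow> b \<ge> 1 \<Longrightarrow> D a b \<omega> = D' a b \<omega>' \<and> X a b \<omega> = X' a b \<omega>' \<and> R a b \<omega> = R' a b \<omega>'"
  shows "fcfs_proc D X R L n \<omega> = fcfs_proc D' X' R' L n \<omega>'"
  using assms
proof (induction n)
  case 0 thus ?case by simp
next
  case (Suc n)
  hence IH: "fcfs_proc D X R L n \<omega> = fcfs_proc D' X' R' L n \<omega>'" by auto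
  show ?case using Suc.prems IH
    by (simp, intro fcfs_count_cong) (auto intro!: sum.cong)
qed

lemma meas_coord: "(\<lambda>v. v i) \<in> borel_measurable (PiM A (\<lambda>_. borel :: real measure))"
proof (cases "i \<in> A")
  case True thus ?thesis by (rule measurable_component_singleton)
next
  case False
  have "(\<lambda>v. undefined :: real) \<in> borel_measurable (PiM A (\<lambda>_. borel :: real measure))" by simp
  thus ?thesis by (rule measurable_cong[THEN iffD1, rotated]) (use False in \<open>auto simp: space_PiM PiE_def extensional_def\<close>)
qed

lemma meas_Dv[measurable]: "Dv a b \<in> measurable (PiM A (\<lambda>_. borel)) (count_space UNIV)"
  unfolding Dv_def using meas_coord[of "Inl (a,b)" A] by measurable
lemma meas_Xv[measurable]: "Xv a b \<in> borel_measurable (PiM A (\<lambda>_. borel))"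
  unfolding Xv_def by (rule meas_coord)
lemma meas_Rv[measurable]: "Rv a b \<in> borel_measurable (PiM A (\<lambda>_. borel))"
  unfolding Rv_def by (rule meas_coord)

lemma meas_fcfs_count:
  fixes N :: "'b measure"
  assumes [measurable]: "t \<in> measurable N (count_space UNIV)" "\<And>k. x k \<in> borel_measurable N" "s \<in> borel_measurable N"
  shows "(\<lambda>v. fcfs_count (t v) (\<lambda>k. x k v) (s v)) \<in> measurable N (count_space UNIV)"
proof -
  have "(\<lambda>t' v. fcfs_count t' (\<lambda>k. x k v) (s v)) i \<in> measurable N (count_space UNIV)" for i :: nat
    unfolding fcfs_count_def by measurable
  from measurable_compose_countable[where f="\<lambda>t' v. fcfs_count t' (\<lambda>k. x k v) (s v)", OF this assms(1)] show ?thesis by simp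
qed

lemma meas_sum_nat:
  fixes N :: "'b measure" and f :: "nat \<Rightarrow> 'b \<Rightarrow> nat"
  assumes [measurable]: "u \<in> measurable N (count_space UNIV)" "\<And>j. f j \<in> measurable N (count_space UNIV)"
  shows "(\<lambda>v. (\<Sum>j=1..u v. f j v) :: nat) \<in> measurable N (count_space UNIV)"
proof -
  have "(\<lambda>u' v. (\<Sum>j=1..u'. f j v)::nat) i \<in> measurable N (count_space UNIV)" for i :: nat by measurable
  from measurable_compose_countable[where f="%i::nat. (\<lambda>v. (\<Sum>j=1..i. f j v))", OF this assms(1)] show ?thesis by simp
qed

lemma meas_sum_real:
  fixes N :: "'b measure" and f :: "nat \<Rightarrow> 'b \<Rightarrow> real"
  assumes [measurable]: "u \<in> measurable N (count_space UNIV)" "\<And>j. f j \<in> borel_measurable N"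
  shows "(\<lambda>v. (\<Sum>j=1..u v. f j v) :: real) \<in> borel_measurable N"
proof -
  have "(\<lambda>u' v. (\<Sum>j=1..u'. f j v)::real) i \<in> borel_measurable N" for i :: nat by measurable
  from measurable_compose_countable[where f="%i::nat. (\<lambda>v. (\<Sum>j=1..i. f j v))", OF this assms(1)] show ?thesis by simp
qed

lemma meas_Uv[measurable]:
  "fcfs_proc Dv Xv Rv L n \<in> measurable (PiM A (\<lambda>_. borel)) (count_space UNIV)"
proof (induction n)
  case 0 thus ?case by simp
next
  case (Suc n)
  note [measurable] = Suc
  show ?case
    by (simp only: fcfs_proc.simps, intro meas_fcfs_count meas_sum_nat meas_sum_real) (auto intro: Suc)
qed

lemma (in prob_space) indep_split_nn:
  assumes ind: "indep_var S X T Y" and h: "h \<in> borel_measurable (S \<Otimes>\<^sub>M T)"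
  shows "(\<integral>\<^sup>+\<omega>. h (X \<omega>, Y \<omega>) \<partial>M) = (\<integral>\<^sup>+\<omega>. (\<integral>\<^sup>+\<omega>'. h (X \<omega>, Y \<omega>') \<partial>M) \<partial>M)"
proof -
  have rv: "random_variable S X" "random_variable T Y"
    using ind by (blast dest: indep_var_rv1 indep_var_rv2)+
  interpret PX: prob_space "distr M S X" by (rule prob_space_distr) (fact rv)
  interpret PY: prob_space "distr M T Y" by (rule prob_space_distr) (fact rv)
  interpret PXY: pair_sigma_finite "distr M S X" "distr M T Y" ..
  have eq: "distr M S X \<Otimes>\<^sub>M distr M T Y = distr M (S \<Otimes>\<^sub>M T) (\<lambda>x. (X x, Y x))"
    using ind by (simp add: indep_var_distribution_eq)
  have "(\<integral>\<^sup>+\<omega>. h (X \<omega>, Y \<omega>) \<partial>M) = (\<integral>\<^sup>+z. h z \<partial>distr M (S \<Otimes>\<^sub>M T) (\<lambda>x. (X x, Y x)))"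
    using rv h by (subst nn_integral_distr) (auto intro!: measurable_Pair)
  also have "\<dots> = (\<integral>\<^sup>+z. h z \<partial>(distr M S X \<Otimes>\<^sub>M distr M T Y))" by (simp add: eq)
  also have "\<dots> = (\<integral>\<^sup>+x. \<integral>\<^sup>+y. h (x, y) \<partial>distr M T Y \<partial>distr M S X)"
  proof -
    have hm: "h \<in> borel_measurable (distr M S X \<Otimes>\<^sub>M distr M T Y)"
      using h by (simp cong: measurable_cong_sets)
    show ?thesis using PY.nn_integral_fst[OF hm] by simp
  qed
  also have "\<dots> = (\<integral>\<^sup>+x. \<integral>\<^sup>+\<omega>'. h (x, Y \<omega>') \<partial>M \<partial>distr M S X)"
    using rv h by (intro nn_integral_cong, subst nn_integral_distr) (auto simp: space_distr)
  also have "\<dots> = (\<integral>\<^sup>+\<omega>. (\<integral>\<^sup>+\<omega>'. h (X \<omega>, Y \<omega>') \<partial>M) \<partial>M)"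
  proof -
    have m1: "(\<lambda>x. \<integral>\<^sup>+y. h (x, y) \<partial>distr M T Y) \<in> borel_measurable S"
      using h by (intro PY.borel_measurable_nn_integral_fst) (simp cong: measurable_cong_sets)
    have eqx: "x \<in> space S \<Longrightarrow> (\<integral>\<^sup>+y. h (x, y) \<partial>distr M T Y) = (\<integral>\<^sup>+\<omega>'. h (x, Y \<omega>') \<partial>M)" for x
      using rv h by (subst nn_integral_distr) auto
    have "(\<lambda>x. \<integral>\<^sup>+\<omega>'. h (x, Y \<omega>') \<partial>M) \<in> borel_measurable S"
      using measurable_cong[of S "\<lambda>x. \<integral>\<^sup>+y. h (x, y) \<partial>distr M T Y" "\<lambda>x. \<integral>\<^sup>+\<omega>'. h (x, Y \<omega>') \<partial>M"] m1 eqx by simp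
    then show ?thesis using rv by (subst nn_integral_distr) auto
  qed
  finally show ?thesis .
qed

definition row :: "idx \<Rightarrow> nat" where
  "row i = (case i of Inl (a,b) \<Rightarrow> a | Inr (Inl (a,b)) \<Rightarrow> a | Inr (Inr (a,b)) \<Rightarrow> a)"

definition Idx :: "idx set" where
  "Idx = Inl ` {(n, k). k \<ge> 1} \<union> Inr ` Inl ` {(n, k). k \<ge> 1} \<union> Inr ` Inr ` {(n, k). k \<ge> 1}"

definition before :: "nat \<Rightarrow> idx set" where "before n = {i \<in> Idx. row i < n}"
definition rowset :: "nat \<Rightarrow> idx set" where "rowset n = {i \<in> Idx. row i = n}"

definition Gv :: "nat \<Rightarrow> nat \<Rightarrow> (idx \<Rightarrow> real) \<Rightarrow> nat" where
  "Gv n u v = fcfs_count (\<Sum>j=1..u. Dv n j v) (\<lambda>k. Xv n k v) (\<Sum>j=1..u. Rv n j v)"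

lemma meas_Gv[measurable]: "Gv n u \<in> measurable (PiM A (\<lambda>_. borel)) (count_space UNIV)"
  unfolding Gv_def by (intro meas_fcfs_count) measurable

locale fcfs = prob_space M for M :: "'a measure" +
  fixes D :: "nat \<Rightarrow> nat \<Rightarrow> 'a \<Rightarrow> nat"
    and X R :: "nat \<Rightarrow> nat \<Rightarrow> 'a \<Rightarrow> real"
  assumes D_meas: "\<And>n k. D n k \<in> measurable M (count_space UNIV)"
    and X_meas: "\<And>n k. X n k \<in> borel_measurable M"
    and R_meas: "\<And>n k. R n k \<in> borel_measurable M"
    and indep: "indep_vars (\<lambda>_. borel)
         (\<lambda>i \<omega>. case i of Inl (n, k) \<Rightarrow> real (D n k \<omega>)
                       | Inr (Inl (n, k)) \<Rightarrow> X n k \<omega>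
                       | Inr (Inr (n, k)) \<Rightarrow> R n k \<omega>)
         (Inl ` {(n, k). k \<ge> 1} \<union> Inr ` Inl ` {(n, k). k \<ge> 1} \<union> Inr ` Inr ` {(n, k). k \<ge> 1})"
    and D_id: "\<And>n k. k \<ge> 1 \<Longrightarrow> distr M (count_space UNIV) (D n k) = distr M (count_space UNIV) (D 0 1)"
    and X_id: "\<And>n k. k \<ge> 1 \<Longrightarrow> distr M borel (X n k) = distr M borel (X 0 1)"
    and R_id: "\<And>n k. k \<ge> 1 \<Longrightarrow> distr M borel (R n k) = distr M borel (R 0 1)"
    and X_nonneg: "\<And>n k \<omega>. \<omega> \<in> space M \<Longrightarrow> X n k \<omega> \<ge> 0"
    and R_nonneg: "\<And>n k \<omega>. \<omega> \<in> space M \<Longrightarrow> R n k \<omega> \<ge> 0"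
    and D_int: "integrable M (\<lambda>\<omega>. real (D 0 1 \<omega>))"
    and R_int: "integrable M (R 0 1)"
    and X_int: "integrable M (X 0 1)"
    and D_sq: "integrable M (\<lambda>\<omega>. (real (D 0 1 \<omega>))\<^sup>2)"
    and X_sq: "integrable M (\<lambda>\<omega>. (X 0 1 \<omega>)\<^sup>2)"
    and R_sq: "integrable M (\<lambda>\<omega>. (R 0 1 \<omega>)\<^sup>2)"
begin

definition V :: "idx \<Rightarrow> 'a \<Rightarrow> real" where
  "V i \<omega> = (case i of Inl (n, k) \<Rightarrow> real (D n k \<omega>)
                       | Inr (Inl (n, k)) \<Rightarrow> X n k \<omega>
                       | Inr (Inr (n, k)) \<Rightarrow> R n k \<omega>)"

definition Yv :: "idx set \<Rightarrow> 'a \<Rightarrow> idx \<Rightarrow> real" where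
  "Yv A \<omega> = restrict (\<lambda>i. V i \<omega>) A"

abbreviation U where "U L n \<omega> \<equiv> fcfs_proc D X R L n \<omega>"

definition G :: "nat \<Rightarrow> nat \<Rightarrow> 'a \<Rightarrow> nat" where
  "G n u \<omega> = fcfs_count (\<Sum>j=1..u. D n j \<omega>) (\<lambda>k. X n k \<omega>) (\<Sum>j=1..u. R n j \<omega>)"

lemma U_Suc: "U L (Suc n) \<omega> = G n (U L n \<omega>) \<omega>"
  by (simp add: G_def)

lemma indep_V: "indep_vars (\<lambda>_. borel) V Idx"
  using indep unfolding V_def[abs_def] Idx_def .

lemma V_meas[measurable]: "V i \<in> borel_measurable M"
proof -
  obtain a b where "i = Inl (a,b) \<or> i = Inr (Inl (a,b)) \<or> i = Inr (Inr (a,b))"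
    by (metis sum.exhaust surj_pair)
  then show ?thesis using D_meas[of a b] X_meas[of a b] R_meas[of a b]
    by (auto simp: V_def[abs_def])
qed

lemma Yv_meas[measurable]: "Yv A \<in> measurable M (PiM A (\<lambda>_. borel))"
  unfolding Yv_def by (intro measurable_restrict) simp

lemma indep_Y:
  assumes "A \<inter> B = {}" "A \<subseteq> Idx" "B \<subseteq> Idx"
  shows "indep_var (PiM A (\<lambda>_. borel)) (Yv A) (PiM B (\<lambda>_. borel)) (Yv B)"
  unfolding Yv_def[abs_def] by (rule indep_var_restrict[OF indep_V assms])

lemma split_nn:
  assumes "A \<inter> B = {}" "A \<subseteq> Idx" "B \<subseteq> Idx"
    and h: "h \<in> borel_measurable (PiM A (\<lambda>_. borel) \<Otimes>\<^sub>M PiM B (\<lambda>_. borel))"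
  shows "(\<integral>\<^sup>+\<omega>. h (Yv A \<omega>, Yv B \<omega>) \<partial>M) = (\<integral>\<^sup>+\<omega>. (\<integral>\<^sup>+\<omega>'. h (Yv A \<omega>, Yv B \<omega>') \<partial>M) \<partial>M)"
  by (rule indep_split_nn[OF indep_Y[OF assms(1-3)] h])

lemma Dv_Y: "Inl (a,b) \<in> A \<Longrightarrow> Dv a b (Yv A \<omega>) = D a b \<omega>"
  by (simp add: Dv_def Yv_def V_def)
lemma Xv_Y: "Inr (Inl (a,b)) \<in> A \<Longrightarrow> Xv a b (Yv A \<omega>) = X a b \<omega>"
  by (simp add: Xv_def Yv_def V_def)
lemma Rv_Y: "Inr (Inr (a,b)) \<in> A \<Longrightarrow> Rv a b (Yv A \<omega>) = R a b \<omega>"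
  by (simp add: Rv_def Yv_def V_def)

lemma U_Y:
  assumes "before n \<subseteq> A"
  shows "U L n \<omega> = fcfs_proc Dv Xv Rv L n (Yv A \<omega>)"
proof (rule proc_cong)
  fix a b :: nat assume "a < n" "1 \<le> b"
  hence "Inl (a,b) \<in> A" "Inr (Inl (a,b)) \<in> A" "Inr (Inr (a,b)) \<in> A"
    using assms by (auto simp: before_def Idx_def row_def)
  thus "D a b \<omega> = Dv a b (Yv A \<omega>) \<and> X a b \<omega> = Xv a b (Yv A \<omega>) \<and> R a b \<omega> = Rv a b (Yv A \<omega>)"
    by (simp add: Dv_Y Xv_Y Rv_Y)
qed

lemma G_Y:
  assumes "rowset n \<subseteq> A"
  shows "G n u \<omega> = Gv n u (Yv A \<omega>)"
proof -
  have "\<And>b. b \<ge> 1 \<Longrightarrow> Inl (n,b) \<in> A \<and> Inr (Inl (n,b)) \<in> A \<and> Inr (Inr (n,b)) \<in> A"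
    using assms by (auto simp: rowset_def Idx_def row_def)
  note * = this
  have e1: "(\<Sum>j=1..u. D n j \<omega>) = (\<Sum>j=1..u. Dv n j (Yv A \<omega>))"
    using * by (intro sum.cong) (auto simp: Dv_Y)
  have e3: "(\<Sum>j=1..u. R n j \<omega>) = (\<Sum>j=1..u. Rv n j (Yv A \<omega>))"
    using * by (intro sum.cong) (auto simp: Rv_Y)
  show ?thesis unfolding G_def Gv_def e1 e3
    by (rule fcfs_count_cong) (use * in \<open>auto simp: Xv_Y\<close>)
qed

lemma U_meas[measurable]: "U L n \<in> measurable M (count_space UNIV)"
proof -
  have "(\<lambda>\<omega>. fcfs_proc Dv Xv Rv L n (Yv (before n) \<omega>)) \<in> measurable M (count_space UNIV)"
    by measurable
  moreover have "U L n = (\<lambda>\<omega>. fcfs_proc Dv Xv Rv L n (Yv (before n) \<omega>))"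
    by (rule ext) (rule U_Y, simp)
  ultimately show ?thesis by simp
qed

lemma G_meas[measurable]: "G n u \<in> measurable M (count_space UNIV)"
proof -
  have "(\<lambda>\<omega>. Gv n u (Yv (rowset n) \<omega>)) \<in> measurable M (count_space UNIV)"
    by measurable
  moreover have "G n u = (\<lambda>\<omega>. Gv n u (Yv (rowset n) \<omega>))"
    by (rule ext) (rule G_Y, simp)
  ultimately show ?thesis by simp
qed

lemma before_rowset: "before n \<inter> rowset n = {}" "before n \<subseteq> Idx" "rowset n \<subseteq> Idx"
  by (auto simp: before_def rowset_def)

end

context fcfs begin

lemma meas_nat_fun[measurable]:
  fixes g :: "'b \<Rightarrow> nat" and \<psi> :: "nat \<Rightarrow> ennreal"
  assumes "g \<in> measurable N (count_space UNIV)"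
  shows "(\<lambda>x. \<psi> (g x)) \<in> borel_measurable N"
  using measurable_compose[OF assms, of \<psi> borel] by simp

lemma step_nn:
  fixes \<psi> :: "nat \<Rightarrow> ennreal" and \<phi> :: "nat \<Rightarrow> nat \<Rightarrow> ennreal"
  assumes "n0 \<le> n"
  shows "(\<integral>\<^sup>+\<omega>. \<psi> (U L n0 \<omega>) * \<phi> (U L n \<omega>) (G n (U L n \<omega>) \<omega>) \<partial>M)
       = (\<integral>\<^sup>+\<omega>. \<psi> (U L n0 \<omega>) * (\<integral>\<^sup>+\<omega>'. \<phi> (U L n \<omega>) (G n (U L n \<omega>) \<omega>') \<partial>M) \<partial>M)"
proof -
  let ?A = "before n" and ?B = "rowset n"
  let ?P = "PiM ?A (\<lambda>_. borel) \<Otimes>\<^sub>M PiM ?B (\<lambda>_. borel) :: ((idx \<Rightarrow> real) \<times> (idx \<Rightarrow> real)) measure"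
  define h where "h p = \<psi> (fcfs_proc Dv Xv Rv L n0 (fst p)) *
      \<phi> (fcfs_proc Dv Xv Rv L n (fst p)) (Gv n (fcfs_proc Dv Xv Rv L n (fst p)) (snd p))" for p
  have m1: "(\<lambda>p. \<psi> (fcfs_proc Dv Xv Rv L n0 (fst p))) \<in> borel_measurable ?P"
    by measurable
  have "(\<lambda>a p. \<phi> a (Gv n a (snd p))) i \<in> borel_measurable ?P" for i :: nat
    by measurable
  from measurable_compose_countable[where f="\<lambda>a p. \<phi> a (Gv n a (snd p))", OF this,
      of "\<lambda>p. fcfs_proc Dv Xv Rv L n (fst p)"]
  have m2: "(\<lambda>p. \<phi> (fcfs_proc Dv Xv Rv L n (fst p)) (Gv n (fcfs_proc Dv Xv Rv L n (fst p)) (snd p)))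
        \<in> borel_measurable ?P" by measurable
  have hm: "h \<in> borel_measurable ?P" unfolding h_def using m1 m2 by measurable
  have bn0: "before n0 \<subseteq> before n" using assms by (auto simp: before_def)
  have eqL: "\<psi> (U L n0 \<omega>) * \<phi> (U L n \<omega>) (G n (U L n \<omega>) \<omega>) = h (Yv ?A \<omega>, Yv ?B \<omega>)" for \<omega>
    unfolding h_def using U_Y[OF bn0, of L \<omega>] U_Y[of n ?A L \<omega>] G_Y[of n ?B _ \<omega>] by simp
  have eqR: "\<psi> (U L n0 \<omega>) * (\<integral>\<^sup>+\<omega>'. \<phi> (U L n \<omega>) (G n (U L n \<omega>) \<omega>') \<partial>M)
      = (\<integral>\<^sup>+\<omega>'. h (Yv ?A \<omega>, Yv ?B \<omega>') \<partial>M)" for \<omega>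
    unfolding h_def using U_Y[OF bn0, of L \<omega>] U_Y[of n ?A L \<omega>] G_Y[of n ?B _]
    by (simp add: nn_integral_cmult)
  show ?thesis unfolding eqL eqR
    by (rule split_nn[OF before_rowset hm])
qed

end

lemma fcfs_count_zero[simp]: "fcfs_count 0 x s = 0" by (simp add: fcfs_count_def)

context fcfs begin

lemma G_zero[simp]: "G n 0 \<omega> = 0" by (simp add: G_def)

lemma U_absorb: "U L n \<omega> = 0 \<Longrightarrow> n \<le> m \<Longrightarrow> U L m \<omega> = 0"
proof (induction m)
  case 0 thus ?case by simp
next
  case (Suc m) thus ?case by (cases "n = Suc m") (auto simp: U_Suc)
qed

lemma ext_iff: "(\<lambda>n. U L n \<omega>) \<longlonglongrightarrow> 0 \<longleftrightarrow> (\<exists>n. U L n \<omega> = 0)"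
proof
  assume "(\<lambda>n. U L n \<omega>) \<longlonglongrightarrow> 0"
  from order_tendstoD(2)[OF this, of 1] obtain N where "\<forall>n\<ge>N. U L n \<omega> < 1"
    by (auto simp: eventually_sequentially)
  thus "\<exists>n. U L n \<omega> = 0" by auto
next
  assume "\<exists>n. U L n \<omega> = 0"
  then obtain n where "U L n \<omega> = 0" by auto
  hence "eventually (\<lambda>m. U L m \<omega> = 0) sequentially"
    using U_absorb[of L n \<omega>] by (auto simp: eventually_sequentially)
  thus "(\<lambda>n. U L n \<omega>) \<longlonglongrightarrow> 0" by (rule tendsto_eventually)
qed

lemma ext_set: "{\<omega> \<in> space M. (\<lambda>n. U L n \<omega>) \<longlonglongrightarrow> 0} = (\<Union>n. {\<omega> \<in> space M. U L n \<omega> = 0})"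
  by (auto simp: ext_iff)

lemma ext_sets: "{\<omega> \<in> space M. (\<lambda>n. U L n \<omega>) \<longlonglongrightarrow> 0} \<in> sets M"
  unfolding ext_set by measurable

end

context fcfs begin

lemma indep_pair_V:
  assumes "a \<in> Idx" "b \<in> Idx" "a \<noteq> b"
  shows "indep_var borel (V a) borel (V b)"
proof -
  have "indep_var (PiM {a} (\<lambda>_. borel)) (Yv {a}) (PiM {b} (\<lambda>_. borel)) (Yv {b})"
    using assms by (intro indep_Y) auto
  from indep_var_compose[OF this, of "\<lambda>v. v a" borel "\<lambda>v. v b" borel]
  have "indep_var borel ((\<lambda>v. v a) \<circ> Yv {a}) borel ((\<lambda>v. v b) \<circ> Yv {b})"
    by (simp add: meas_coord)
  moreover have "(\<lambda>v. v a) \<circ> Yv {a} = V a" "(\<lambda>v. v b) \<circ> Yv {b} = V b"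
    by (auto simp: Yv_def)
  ultimately show ?thesis by simp
qed

lemma cheb_sum:
  fixes \<iota> :: "nat \<Rightarrow> idx"
  assumes J: "finite J" "inj_on \<iota> J" "\<iota> ` J \<subseteq> Idx"
    and int1: "\<And>j. j \<in> J \<Longrightarrow> integrable M (V (\<iota> j))"
    and int2: "\<And>j. j \<in> J \<Longrightarrow> integrable M (\<lambda>\<omega>. (V (\<iota> j) \<omega>)\<^sup>2)"
    and e1: "\<And>j. j \<in> J \<Longrightarrow> expectation (V (\<iota> j)) = \<nu>"
    and e2: "\<And>j. j \<in> J \<Longrightarrow> expectation (\<lambda>\<omega>. (V (\<iota> j) \<omega>)\<^sup>2) = s2"
    and eps: "\<epsilon> > 0"
  shows "prob {\<omega> \<in> space M. \<epsilon> \<le> \<bar>(\<Sum>j\<in>J. V (\<iota> j) \<omega>) - real (card J) * \<nu>\<bar>} \<le> real (card J) * (s2 - \<nu>\<^sup>2) / \<epsilon>\<^sup>2"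
proof -
  define Z where "Z j \<omega> = V (\<iota> j) \<omega> - \<nu>" for j \<omega>
  define W where "W \<omega> = (\<Sum>j\<in>J. Z j \<omega>)" for \<omega>
  have Zm[measurable]: "Z j \<in> borel_measurable M" for j unfolding Z_def by measurable
  have Zint: "j \<in> J \<Longrightarrow> integrable M (Z j)" for j unfolding Z_def using int1 by auto
  have Z0: "j \<in> J \<Longrightarrow> expectation (Z j) = 0" for j
    unfolding Z_def using int1 e1 by (simp add: prob_space)
  have prodint: "integrable M (\<lambda>\<omega>. Z i \<omega> * Z j \<omega>)" and
       prodE: "expectation (\<lambda>\<omega>. Z i \<omega> * Z j \<omega>) = (if i = j then s2 - \<nu>\<^sup>2 else 0)"
    if ij: "i \<in> J" "j \<in> J" for i j
  proof -
    have "integrable M (\<lambda>\<omega>. Z i \<omega> * Z j \<omega>) \<and> expectation (\<lambda>\<omega>. Z i \<omega> * Z j \<omega>) = (if i = j then s2 - \<nu>\<^sup>2 else 0)"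
    proof (cases "i = j")
      case True
      have eq: "(\<lambda>\<omega>. Z i \<omega> * Z i \<omega>) = (\<lambda>\<omega>. (V (\<iota> i) \<omega>)\<^sup>2 - 2 * \<nu> * V (\<iota> i) \<omega> + \<nu>\<^sup>2)"
        by (auto simp: Z_def power2_eq_square algebra_simps)
      have "integrable M (\<lambda>\<omega>. (V (\<iota> i) \<omega>)\<^sup>2 - 2 * \<nu> * V (\<iota> i) \<omega> + \<nu>\<^sup>2)"
        using int1[OF ij(1)] int2[OF ij(1)] by auto
      moreover have "expectation (\<lambda>\<omega>. (V (\<iota> i) \<omega>)\<^sup>2 - 2 * \<nu> * V (\<iota> i) \<omega> + \<nu>\<^sup>2) = s2 - \<nu>\<^sup>2"
        using int1[OF ij(1)] int2[OF ij(1)] e1[OF ij(1)] e2[OF ij(1)]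
        by (simp add: prob_space power2_eq_square)
      ultimately show ?thesis using True eq by simp
    next
      case False
      hence "\<iota> i \<noteq> \<iota> j" using J(2) ij by (auto dest: inj_onD)
      hence "indep_var borel (V (\<iota> i)) borel (V (\<iota> j))" using J(3) ij by (intro indep_pair_V) auto
      from indep_var_compose[OF this, of "\<lambda>x. x - \<nu>" borel "\<lambda>x. x - \<nu>" borel]
      have ind: "indep_var borel (Z i) borel (Z j)" by (simp add: o_def Z_def[abs_def])
      show ?thesis using indep_var_lebesgue_integral[OF ind Zint[OF ij(1)] Zint[OF ij(2)]]
          indep_var_integrable[OF ind Zint[OF ij(1)] Zint[OF ij(2)]] Z0 ij False by simp
    qed
    thus "integrable M (\<lambda>\<omega>. Z i \<omega> * Z j \<omega>)" "expectation (\<lambda>\<omega>. Z i \<omega> * Z j \<omega>) = (if i = j then s2 - \<nu>\<^sup>2 else 0)"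
      by auto
  qed
  have Wsq: "(\<lambda>\<omega>. (W \<omega>)\<^sup>2) = (\<lambda>\<omega>. \<Sum>i\<in>J. \<Sum>j\<in>J. Z i \<omega> * Z j \<omega>)"
    by (auto simp: W_def power2_eq_square sum_product)
  have W2int: "integrable M (\<lambda>\<omega>. (W \<omega>)\<^sup>2)"
    unfolding Wsq by (auto intro!: integrable_sum prodint)
  have EW2: "expectation (\<lambda>\<omega>. (W \<omega>)\<^sup>2) = real (card J) * (s2 - \<nu>\<^sup>2)"
  proof -
    have "expectation (\<lambda>\<omega>. (W \<omega>)\<^sup>2) = (\<Sum>i\<in>J. \<Sum>j\<in>J. expectation (\<lambda>\<omega>. Z i \<omega> * Z j \<omega>))"
      unfolding Wsq using prodint by (simp add: integral_sum integrable_sum)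
    also have "\<dots> = (\<Sum>i\<in>J. \<Sum>j\<in>J. (if i = j then s2 - \<nu>\<^sup>2 else 0))"
      by (intro sum.cong refl) (simp add: prodE)
    also have "\<dots> = real (card J) * (s2 - \<nu>\<^sup>2)" using J(1) by simp
    finally show ?thesis .
  qed
  have EW: "expectation W = 0"
    unfolding W_def using Zint Z0 by (simp add: integral_sum)
  have Wm[measurable]: "W \<in> borel_measurable M" unfolding W_def by measurable
  have "prob {\<omega> \<in> space M. \<bar>W \<omega> - expectation W\<bar> \<ge> \<epsilon>} \<le> variance W / \<epsilon>\<^sup>2"
    by (rule Chebyshev_inequality[OF Wm _ eps]) (use W2int in \<open>simp add: power2_eq_square\<close>)
  moreover have "variance W = real (card J) * (s2 - \<nu>\<^sup>2)" using EW EW2 by simp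
  moreover have "W \<omega> = (\<Sum>j\<in>J. V (\<iota> j) \<omega>) - real (card J) * \<nu>" for \<omega>
    unfolding W_def Z_def by (simp add: sum_subtractf)
  ultimately show ?thesis using EW by simp
qed

end

context fcfs begin

lemma D_transfer:
  fixes f :: "nat \<Rightarrow> real"
  assumes "k \<ge> 1"
  shows "integrable M (\<lambda>\<omega>. f (D n k \<omega>)) \<longleftrightarrow> integrable M (\<lambda>\<omega>. f (D 0 1 \<omega>))"
    and "expectation (\<lambda>\<omega>. f (D n k \<omega>)) = expectation (\<lambda>\<omega>. f (D 0 1 \<omega>))"
proof -
  have m: "D n k \<in> measurable M (count_space UNIV)" "D 0 1 \<in> measurable M (count_space UNIV)"
    using D_meas by auto
  show "integrable M (\<lambda>\<omega>. f (D n k \<omega>)) \<longleftrightarrow> integrable M (\<lambda>\<omega>. f (D 0 1 \<omega>))"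
    using integrable_distr_eq[OF m(1), of f] integrable_distr_eq[OF m(2), of f] D_id[OF assms, of n]
    by simp
  show "expectation (\<lambda>\<omega>. f (D n k \<omega>)) = expectation (\<lambda>\<omega>. f (D 0 1 \<omega>))"
    using integral_distr[OF m(1), of f] integral_distr[OF m(2), of f] D_id[OF assms, of n]
    by simp
qed

lemma D_prob: "k \<ge> 1 \<Longrightarrow> prob {\<omega> \<in> space M. D n k \<omega> = j} = prob {\<omega> \<in> space M. D 0 1 \<omega> = j}"
proof -
  assume k: "k \<ge> 1"
  have m: "D n k \<in> measurable M (count_space UNIV)" "D 0 1 \<in> measurable M (count_space UNIV)"
    using D_meas by auto
  have "measure (distr M (count_space UNIV) (D n k)) {j} = measure (distr M (count_space UNIV) (D 0 1)) {j}"
    using D_id[OF k] by simp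
  thus ?thesis using m by (simp add: measure_distr vimage_def Int_def conj_commute)
qed

lemma X_transfer:
  fixes f :: "real \<Rightarrow> real"
  assumes "k \<ge> 1" and [measurable]: "f \<in> borel_measurable borel"
  shows "integrable M (\<lambda>\<omega>. f (X n k \<omega>)) \<longleftrightarrow> integrable M (\<lambda>\<omega>. f (X 0 1 \<omega>))"
    and "expectation (\<lambda>\<omega>. f (X n k \<omega>)) = expectation (\<lambda>\<omega>. f (X 0 1 \<omega>))"
proof -
  have m: "X n k \<in> borel_measurable M" "X 0 1 \<in> borel_measurable M"
    using X_meas by auto
  show "integrable M (\<lambda>\<omega>. f (X n k \<omega>)) \<longleftrightarrow> integrable M (\<lambda>\<omega>. f (X 0 1 \<omega>))"
    using integrable_distr_eq[OF m(1), of f] integrable_distr_eq[OF m(2), of f] X_id[OF assms(1), of n]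
    by simp
  show "expectation (\<lambda>\<omega>. f (X n k \<omega>)) = expectation (\<lambda>\<omega>. f (X 0 1 \<omega>))"
    using integral_distr[OF m(1), of f] integral_distr[OF m(2), of f] X_id[OF assms(1), of n]
    by simp
qed

lemma X_transfer_nn:
  fixes f :: "real \<Rightarrow> ennreal"
  assumes "k \<ge> 1" and [measurable]: "f \<in> borel_measurable borel"
  shows "(\<integral>\<^sup>+\<omega>. f (X n k \<omega>) \<partial>M) = (\<integral>\<^sup>+\<omega>. f (X 0 1 \<omega>) \<partial>M)"
proof -
  have m: "X n k \<in> borel_measurable M" "X 0 1 \<in> borel_measurable M"
    using X_meas by auto
  show ?thesis
    using nn_integral_distr[OF m(1), of f] nn_integral_distr[OF m(2), of f] X_id[OF assms(1), of n]
    by simp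
qed

lemma R_transfer:
  fixes f :: "real \<Rightarrow> real"
  assumes "k \<ge> 1" and [measurable]: "f \<in> borel_measurable borel"
  shows "integrable M (\<lambda>\<omega>. f (R n k \<omega>)) \<longleftrightarrow> integrable M (\<lambda>\<omega>. f (R 0 1 \<omega>))"
    and "expectation (\<lambda>\<omega>. f (R n k \<omega>)) = expectation (\<lambda>\<omega>. f (R 0 1 \<omega>))"
proof -
  have m: "R n k \<in> borel_measurable M" "R 0 1 \<in> borel_measurable M"
    using R_meas by auto
  show "integrable M (\<lambda>\<omega>. f (R n k \<omega>)) \<longleftrightarrow> integrable M (\<lambda>\<omega>. f (R 0 1 \<omega>))"
    using integrable_distr_eq[OF m(1), of f] integrable_distr_eq[OF m(2), of f] R_id[OF assms(1), of n]
    by simp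
  show "expectation (\<lambda>\<omega>. f (R n k \<omega>)) = expectation (\<lambda>\<omega>. f (R 0 1 \<omega>))"
    using integral_distr[OF m(1), of f] integral_distr[OF m(2), of f] R_id[OF assms(1), of n]
    by simp
qed

lemma R_transfer_nn:
  fixes f :: "real \<Rightarrow> ennreal"
  assumes "k \<ge> 1" and [measurable]: "f \<in> borel_measurable borel"
  shows "(\<integral>\<^sup>+\<omega>. f (R n k \<omega>) \<partial>M) = (\<integral>\<^sup>+\<omega>. f (R 0 1 \<omega>) \<partial>M)"
proof -
  have m: "R n k \<in> borel_measurable M" "R 0 1 \<in> borel_measurable M"
    using R_meas by auto
  show ?thesis
    using nn_integral_distr[OF m(1), of f] nn_integral_distr[OF m(2), of f] R_id[OF assms(1), of n]
    by simp
qed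

end

lemma fcfs_count_ge:
  assumes "1 \<le> k" "k \<le> t" "(\<Sum>j=1..k. x j) \<le> s" "\<And>j. j \<ge> 1 \<Longrightarrow> x j \<ge> 0"
  shows "k \<le> fcfs_count t x s"
proof -
  have "x 1 \<le> (\<Sum>j=1..k. x j)"
    using assms(1,4) by (intro member_le_sum) auto
  hence x1: "\<not> x 1 > s" using assms(3) by simp
  have "k \<in> {k \<in> {1..t}. (\<Sum>j=1..k. x j) \<le> s}" using assms by auto
  hence "k \<le> Max {k \<in> {1..t}. (\<Sum>j=1..k. x j) \<le> s}" by (intro Max_ge) auto
  thus ?thesis using x1 assms by (simp add: fcfs_count_def)
qed

context fcfs begin

abbreviation "mD \<equiv> expectation (\<lambda>\<omega>. real (D 0 1 \<omega>))"
abbreviation "mX \<equiv> expectation (X 0 1)"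
abbreviation "mR \<equiv> expectation (R 0 1)"
abbreviation "vD \<equiv> expectation (\<lambda>\<omega>. (real (D 0 1 \<omega>))\<^sup>2) - mD\<^sup>2"
abbreviation "vX \<equiv> expectation (\<lambda>\<omega>. (X 0 1 \<omega>)\<^sup>2) - mX\<^sup>2"
abbreviation "vR \<equiv> expectation (\<lambda>\<omega>. (R 0 1 \<omega>)\<^sup>2) - mR\<^sup>2"

lemma cheb_D:
  assumes "\<epsilon> > 0"
  shows "prob {\<omega> \<in> space M. \<epsilon> \<le> \<bar>(\<Sum>j\<in>{1..u}. real (D n j \<omega>)) - real u * mD\<bar>} \<le> real u * vD / \<epsilon>\<^sup>2"
proof -
  have "prob {\<omega> \<in> space M. \<epsilon> \<le> \<bar>(\<Sum>j\<in>{1..u}. V (Inl (n, j)) \<omega>) - real (card {1..u}) * mD\<bar>}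
    \<le> real (card {1..u}) * (expectation (\<lambda>\<omega>. (real (D 0 1 \<omega>))\<^sup>2) - mD\<^sup>2) / \<epsilon>\<^sup>2"
  proof (rule cheb_sum[OF _ _ _ _ _ _ _ assms])
    show "inj_on (\<lambda>j. Inl (n, j)) {1..u}" by (auto simp: inj_on_def)
    show "(\<lambda>j. Inl (n, j)) ` {1..u} \<subseteq> Idx" by (auto simp: Idx_def)
    fix j assume j: "j \<in> {1..u}"
    show "integrable M (V (Inl (n, j)))"
      using D_transfer(1)[of j real n] j D_int by (simp add: V_def[abs_def])
    show "integrable M (\<lambda>\<omega>. (V (Inl (n, j)) \<omega>)\<^sup>2)"
      using D_transfer(1)[of j "\<lambda>x. (real x)\<^sup>2" n] j D_sq by (simp add: V_def[abs_def])
    show "expectation (V (Inl (n, j))) = mD"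
      using D_transfer(2)[of j real n] j by (simp add: V_def[abs_def])
    show "expectation (\<lambda>\<omega>. (V (Inl (n, j)) \<omega>)\<^sup>2) = expectation (\<lambda>\<omega>. (real (D 0 1 \<omega>))\<^sup>2)"
      using D_transfer(2)[of j "\<lambda>x. (real x)\<^sup>2" n] j by (simp add: V_def[abs_def])
  qed auto
  thus ?thesis by (simp add: V_def)
qed

lemma cheb_R:
  assumes "\<epsilon> > 0"
  shows "prob {\<omega> \<in> space M. \<epsilon> \<le> \<bar>(\<Sum>j\<in>{1..u}. R n j \<omega>) - real u * mR\<bar>} \<le> real u * vR / \<epsilon>\<^sup>2"
proof -
  have "prob {\<omega> \<in> space M. \<epsilon> \<le> \<bar>(\<Sum>j\<in>{1..u}. V (Inr (Inr (n, j))) \<omega>) - real (card {1..u}) * mR\<bar>}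
    \<le> real (card {1..u}) * (expectation (\<lambda>\<omega>. (R 0 1 \<omega>)\<^sup>2) - mR\<^sup>2) / \<epsilon>\<^sup>2"
  proof (rule cheb_sum[OF _ _ _ _ _ _ _ assms])
    show "inj_on (\<lambda>j. Inr (Inr (n, j))) {1..u}" by (auto simp: inj_on_def)
    show "(\<lambda>j. Inr (Inr (n, j))) ` {1..u} \<subseteq> Idx" by (auto simp: Idx_def)
    fix j assume j: "j \<in> {1..u}"
    show "integrable M (V (Inr (Inr (n, j))))"
      using R_transfer(1)[of j "\<lambda>x. x" n] j R_int by (simp add: V_def[abs_def])
    show "integrable M (\<lambda>\<omega>. (V (Inr (Inr (n, j))) \<omega>)\<^sup>2)"
      using R_transfer(1)[of j "\<lambda>x. x\<^sup>2" n] j R_sq by (simp add: V_def[abs_def])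
    show "expectation (V (Inr (Inr (n, j)))) = mR"
      using R_transfer(2)[of j "\<lambda>x. x" n] j by (simp add: V_def[abs_def])
    show "expectation (\<lambda>\<omega>. (V (Inr (Inr (n, j))) \<omega>)\<^sup>2) = expectation (\<lambda>\<omega>. (R 0 1 \<omega>)\<^sup>2)"
      using R_transfer(2)[of j "\<lambda>x. x\<^sup>2" n] j by (simp add: V_def[abs_def])
  qed auto
  thus ?thesis by (simp add: V_def)
qed

lemma cheb_X:
  assumes "\<epsilon> > 0"
  shows "prob {\<omega> \<in> space M. \<epsilon> \<le> \<bar>(\<Sum>j\<in>{1..u}. X n j \<omega>) - real u * mX\<bar>} \<le> real u * vX / \<epsilon>\<^sup>2"
proof -
  have "prob {\<omega> \<in> space M. \<epsilon> \<le> \<bar>(\<Sum>j\<in>{1..u}. V (Inr (Inl (n, j))) \<omega>) - real (card {1..u}) * mX\<bar>}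
    \<le> real (card {1..u}) * (expectation (\<lambda>\<omega>. (X 0 1 \<omega>)\<^sup>2) - mX\<^sup>2) / \<epsilon>\<^sup>2"
  proof (rule cheb_sum[OF _ _ _ _ _ _ _ assms])
    show "inj_on (\<lambda>j. Inr (Inl (n, j))) {1..u}" by (auto simp: inj_on_def)
    show "(\<lambda>j. Inr (Inl (n, j))) ` {1..u} \<subseteq> Idx" by (auto simp: Idx_def)
    fix j assume j: "j \<in> {1..u}"
    show "integrable M (V (Inr (Inl (n, j))))"
      using X_transfer(1)[of j "\<lambda>x. x" n] j X_int by (simp add: V_def[abs_def])
    show "integrable M (\<lambda>\<omega>. (V (Inr (Inl (n, j))) \<omega>)\<^sup>2)"
      using X_transfer(1)[of j "\<lambda>x. x\<^sup>2" n] j X_sq by (simp add: V_def[abs_def])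
    show "expectation (V (Inr (Inl (n, j)))) = mX"
      using X_transfer(2)[of j "\<lambda>x. x" n] j by (simp add: V_def[abs_def])
    show "expectation (\<lambda>\<omega>. (V (Inr (Inl (n, j))) \<omega>)\<^sup>2) = expectation (\<lambda>\<omega>. (X 0 1 \<omega>)\<^sup>2)"
      using X_transfer(2)[of j "\<lambda>x. x\<^sup>2" n] j by (simp add: V_def[abs_def])
  qed auto
  thus ?thesis by (simp add: V_def)
qed

end

lemma aux_lin: fixes a b p q :: real shows "a \<le> b + p \<Longrightarrow> 2*b + p \<le> q \<Longrightarrow> a + (q - p)/2 \<le> q" by (simp add: field_simps)
lemma aux_div: fixes u a v :: real shows "u > 0 \<Longrightarrow> a \<noteq> 0 \<Longrightarrow> u * v / (a * u)\<^sup>2 = v / a\<^sup>2 / u"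
  by (simp add: power2_eq_square field_simps)

context fcfs begin

lemma G_tail:
  assumes c: "1 < c" "c < mD" "c * mX < \<beta>" "\<beta> < mR" and mXp: "mX > 0"
  shows "\<exists>K. \<forall>n u. u \<ge> 1 \<longrightarrow> prob {\<omega> \<in> space M. real (G n u \<omega>) < c * real u} \<le> K / real u"
proof -
  define \<delta> where "\<delta> = \<beta> - c * mX"
  have \<delta>: "\<delta> > 0" using c by (simp add: \<delta>_def)
  define u0 where "u0 = 2 * mX / \<delta>"
  define K where "K = \<bar>vD\<bar> / (mD - c)\<^sup>2 + \<bar>vR\<bar> / (mR - \<beta>)\<^sup>2 + 4 * (c + 1) * \<bar>vX\<bar> / \<delta>\<^sup>2 + u0"
  have u0p: "u0 \<ge> 0" using mXp \<delta> by (simp add: u0_def)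
  have Kp: "K \<ge> u0" unfolding K_def using c by (intro add_increasing) auto
  show ?thesis
  proof (intro exI allI impI)
    fix n u :: nat assume u1: "u \<ge> 1"
    have up: "real u > 0" using u1 by simp
    let ?S = "{\<omega> \<in> space M. real (G n u \<omega>) < c * real u}"
    show "prob ?S \<le> K / real u"
    proof (cases "real u \<le> u0")
      case True
      have "prob ?S \<le> 1" by simp
      also have "1 \<le> u0 / real u" using True up by simp
      also have "\<dots> \<le> K / real u" using Kp up by (simp add: divide_right_mono)
      finally show ?thesis .
    next
      case False
      define k where "k = nat \<lceil>c * real u\<rceil>"
      have k1: "c * real u \<le> real k" unfolding k_def by linarith
      have cu: "0 \<le> c * real u" using c up by simp
      have k2: "real k \<le> c * real u + 1" unfolding k_def using cu
        by (simp add: of_int_ceiling_le_add_one)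
      have "0 < c * real u" using c up by simp
      hence "real k > 0" using k1 by linarith
      hence kge1: "k \<ge> 1" by simp
      define E1 where "E1 = {\<omega> \<in> space M. (mD - c) * real u \<le> \<bar>(\<Sum>j\<in>{1..u}. real (D n j \<omega>)) - real u * mD\<bar>}"
      define E2 where "E2 = {\<omega> \<in> space M. (mR - \<beta>) * real u \<le> \<bar>(\<Sum>j\<in>{1..u}. R n j \<omega>) - real u * mR\<bar>}"
      define E3 where "E3 = {\<omega> \<in> space M. \<delta> * real u / 2 \<le> \<bar>(\<Sum>j\<in>{1..k}. X n j \<omega>) - real k * mX\<bar>}"
      have E1m: "E1 \<in> events" unfolding E1_def using D_meas by measurable
      have E2m: "E2 \<in> events" unfolding E2_def using R_meas by measurable
      have E3m: "E3 \<in> events" unfolding E3_def using X_meas by measurable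
      have sub: "?S \<subseteq> E1 \<union> E2 \<union> E3"
      proof
        fix \<omega> assume \<omega>: "\<omega> \<in> ?S"
        show "\<omega> \<in> E1 \<union> E2 \<union> E3"
        proof (rule ccontr)
          assume "\<omega> \<notin> E1 \<union> E2 \<union> E3"
          hence n1: "\<bar>(\<Sum>j\<in>{1..u}. real (D n j \<omega>)) - real u * mD\<bar> < (mD - c) * real u"
            and n2: "\<bar>(\<Sum>j\<in>{1..u}. R n j \<omega>) - real u * mR\<bar> < (mR - \<beta>) * real u"
            and n3: "\<bar>(\<Sum>j\<in>{1..k}. X n j \<omega>) - real k * mX\<bar> < \<delta> * real u / 2"
            using \<omega> by (auto simp: E1_def E2_def E3_def not_le)
          have t: "c * real u \<le> real (\<Sum>j=1..u. D n j \<omega>)"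
            using n1 by (simp add: of_nat_sum algebra_simps abs_less_iff)
          have kt: "k \<le> (\<Sum>j=1..u. D n j \<omega>)"
            using k1 t unfolding k_def by (simp add: nat_le_iff ceiling_le_iff)
          have s: "\<beta> * real u \<le> (\<Sum>j=1..u. R n j \<omega>)"
            using n2 by (simp add: algebra_simps abs_less_iff)
          have "real k * mX \<le> (c * real u + 1) * mX" using k2 mXp by (intro mult_right_mono) auto
          moreover have "mX \<le> \<delta> * real u / 2" using False \<delta> by (simp add: u0_def field_simps)
          ultimately have "real k * mX + \<delta> * real u / 2 \<le> \<beta> * real u"
            unfolding \<delta>_def using aux_lin by (simp add: algebra_simps)
          moreover have "(\<Sum>j=1..k. X n j \<omega>) < real k * mX + \<delta> * real u / 2"
            using n3 by (simp only: abs_less_iff) linarith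
          ultimately have sk: "(\<Sum>j=1..k. X n j \<omega>) \<le> (\<Sum>j=1..u. R n j \<omega>)"
            using s by linarith
          have "k \<le> G n u \<omega>" unfolding G_def
            by (rule fcfs_count_ge[OF kge1 kt sk]) (use \<omega> X_nonneg in auto)
          hence "c * real u \<le> real (G n u \<omega>)" using k1 by linarith
          thus False using \<omega> by simp
        qed
      qed
      have "prob ?S \<le> prob (E1 \<union> E2 \<union> E3)"
        using sub E1m E2m E3m by (intro finite_measure_mono) auto
      also have "\<dots> \<le> prob E1 + prob E2 + prob E3"
      proof -
        have "prob (E1 \<union> E2 \<union> E3) \<le> prob (E1 \<union> E2) + prob E3"
          using E1m E2m E3m by (intro measure_Un_le) auto
        moreover have "prob (E1 \<union> E2) \<le> prob E1 + prob E2"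
          using E1m E2m by (intro measure_Un_le) auto
        ultimately show ?thesis by linarith
      qed
      also have "prob E1 \<le> \<bar>vD\<bar> / (mD - c)\<^sup>2 / real u"
      proof -
        have "prob E1 \<le> real u * vD / ((mD - c) * real u)\<^sup>2"
          unfolding E1_def using c up by (intro cheb_D) simp
        also have "\<dots> = vD / (mD - c)\<^sup>2 / real u" using up c by (intro aux_div) auto
        also have "\<dots> \<le> \<bar>vD\<bar> / (mD - c)\<^sup>2 / real u" using up by (simp add: divide_right_mono)
        finally show ?thesis .
      qed
      also have "prob E2 \<le> \<bar>vR\<bar> / (mR - \<beta>)\<^sup>2 / real u"
      proof -
        have "prob E2 \<le> real u * vR / ((mR - \<beta>) * real u)\<^sup>2"
          unfolding E2_def using c up by (intro cheb_R) simp
        also have "\<dots> = vR / (mR - \<beta>)\<^sup>2 / real u" using up c by (intro aux_div) auto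
        also have "\<dots> \<le> \<bar>vR\<bar> / (mR - \<beta>)\<^sup>2 / real u" using up by (simp add: divide_right_mono)
        finally show ?thesis .
      qed
      also have "prob E3 \<le> 4 * (c + 1) * \<bar>vX\<bar> / \<delta>\<^sup>2 / real u"
      proof -
        have "prob E3 \<le> real k * vX / (\<delta> * real u / 2)\<^sup>2"
          unfolding E3_def using \<delta> up by (intro cheb_X) simp
        also have "\<dots> \<le> real k * \<bar>vX\<bar> / (\<delta> * real u / 2)\<^sup>2"
          by (intro divide_right_mono mult_left_mono) auto
        also have "\<dots> \<le> ((c + 1) * real u) * \<bar>vX\<bar> / (\<delta> * real u / 2)\<^sup>2"
        proof -
          have "real k \<le> (c + 1) * real u" using k2 u1 by (simp add: algebra_simps)
          thus ?thesis by (intro divide_right_mono mult_right_mono) auto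
        qed
        also have "\<dots> = 4 * (c + 1) * \<bar>vX\<bar> / \<delta>\<^sup>2 / real u"
          using up \<delta> by (simp add: power2_eq_square field_simps)
        finally show ?thesis .
      qed
      also have "\<bar>vD\<bar> / (mD - c)\<^sup>2 / real u + \<bar>vR\<bar> / (mR - \<beta>)\<^sup>2 / real u + 4 * (c + 1) * \<bar>vX\<bar> / \<delta>\<^sup>2 / real u
          \<le> K / real u"
      proof -
        have "\<bar>vD\<bar> / (mD - c)\<^sup>2 + \<bar>vR\<bar> / (mR - \<beta>)\<^sup>2 + 4 * (c + 1) * \<bar>vX\<bar> / \<delta>\<^sup>2 \<le> K"
          unfolding K_def using u0p by linarith
        hence "(\<bar>vD\<bar> / (mD - c)\<^sup>2 + \<bar>vR\<bar> / (mR - \<beta>)\<^sup>2 + 4 * (c + 1) * \<bar>vX\<bar> / \<delta>\<^sup>2) / real u \<le> K / real u"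
          using up by (intro divide_right_mono) auto
        thus ?thesis by (simp only: add_divide_distrib)
      qed
      finally show ?thesis by simp
    qed
  qed
qed

end

context fcfs begin

definition ext :: "nat \<Rightarrow> 'a set" where
  "ext L = {\<omega> \<in> space M. (\<lambda>n. U L n \<omega>) \<longlonglongrightarrow> 0}"

lemma ext_sets': "ext L \<in> events" unfolding ext_def by (rule ext_sets)

lemma fail_bound:
  assumes tail: "\<And>n u. u \<ge> 1 \<Longrightarrow> prob {\<omega> \<in> space M. real (G n u \<omega>) < c * real u} \<le> K / real u"
    and c: "c > 1" and j: "j \<ge> 1" and K: "K \<ge> 0"
  shows "prob {\<omega> \<in> space M. U L n0 \<omega> = j \<and> c ^ i * real j \<le> real (U L (n0 + i) \<omega>)
            \<and> real (U L (Suc (n0 + i)) \<omega>) < c * real (U L (n0 + i) \<omega>)}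
         \<le> prob {\<omega> \<in> space M. U L n0 \<omega> = j} * (K / (c ^ i * real j))"
proof -
  define n where "n = n0 + i"
  define B where "B = K / (c ^ i * real j)"
  have B0: "B \<ge> 0" using K c by (simp add: B_def)
  define \<psi> :: "nat \<Rightarrow> ennreal" where "\<psi> a = (if a = j then 1 else 0)" for a
  define \<phi> :: "nat \<Rightarrow> nat \<Rightarrow> ennreal" where
    "\<phi> a b = (if c ^ i * real j \<le> real a \<and> real b < c * real a then 1 else 0)" for a b
  let ?F = "{\<omega> \<in> space M. U L n0 \<omega> = j \<and> c ^ i * real j \<le> real (U L n \<omega>)
            \<and> real (U L (Suc n) \<omega>) < c * real (U L n \<omega>)}"
  have Fm: "?F \<in> events" by measurable
  have "emeasure M ?F = (\<integral>\<^sup>+\<omega>. \<psi> (U L n0 \<omega>) * \<phi> (U L n \<omega>) (G n (U L n \<omega>) \<omega>) \<partial>M)"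
  proof -
    have "indicator ?F \<omega> = \<psi> (U L n0 \<omega>) * \<phi> (U L n \<omega>) (G n (U L n \<omega>) \<omega>)" if "\<omega> \<in> space M" for \<omega>
      using that unfolding U_Suc indicator_def \<psi>_def \<phi>_def
      by (simp only: mem_Collect_eq of_bool_def split: if_splits) auto
    hence "(\<integral>\<^sup>+\<omega>. indicator ?F \<omega> \<partial>M) = (\<integral>\<^sup>+\<omega>. \<psi> (U L n0 \<omega>) * \<phi> (U L n \<omega>) (G n (U L n \<omega>) \<omega>) \<partial>M)"
      by (rule nn_integral_cong)
    thus ?thesis by (rule trans[OF nn_integral_indicator[OF Fm, symmetric]])
  qed
  also have "\<dots> = (\<integral>\<^sup>+\<omega>. \<psi> (U L n0 \<omega>) * (\<integral>\<^sup>+\<omega>'. \<phi> (U L n \<omega>) (G n (U L n \<omega>) \<omega>') \<partial>M) \<partial>M)"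
    by (rule step_nn) (simp add: n_def)
  also have "\<dots> \<le> (\<integral>\<^sup>+\<omega>. \<psi> (U L n0 \<omega>) * ennreal B \<partial>M)"
  proof (intro nn_integral_mono mult_left_mono)
    fix \<omega>
    let ?a = "U L n \<omega>"
    show "(\<integral>\<^sup>+\<omega>'. \<phi> ?a (G n ?a \<omega>') \<partial>M) \<le> ennreal B"
    proof (cases "c ^ i * real j \<le> real ?a")
      case True
      have ci: "1 \<le> c ^ i" using c by (intro one_le_power) auto
      have "c ^ i * 1 \<le> c ^ i * real j" using j ci by (intro mult_left_mono) auto
      hence cij: "c ^ i * real j \<ge> 1" using ci by linarith
      hence a1: "?a \<ge> 1" using True by simp
      have Sm: "{\<omega>' \<in> space M. real (G n ?a \<omega>') < c * real ?a} \<in> events" by measurable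
      have "\<phi> ?a (G n ?a \<omega>') = indicator {\<omega>' \<in> space M. real (G n ?a \<omega>') < c * real ?a} \<omega>'"
        if "\<omega>' \<in> space M" for \<omega>'
        using that True by (simp add: \<phi>_def indicator_def)
      hence "(\<integral>\<^sup>+\<omega>'. \<phi> ?a (G n ?a \<omega>') \<partial>M) = (\<integral>\<^sup>+\<omega>'. indicator {\<omega>' \<in> space M. real (G n ?a \<omega>') < c * real ?a} \<omega>' \<partial>M)"
        by (rule nn_integral_cong)
      also have "\<dots> = emeasure M {\<omega>' \<in> space M. real (G n ?a \<omega>') < c * real ?a}"
        by (rule nn_integral_indicator[OF Sm])
      also have "\<dots> = ennreal (prob {\<omega>' \<in> space M. real (G n ?a \<omega>') < c * real ?a})"
        by (simp add: emeasure_eq_measure)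
      also have "\<dots> \<le> ennreal (K / real ?a)" using tail[OF a1, of n] by (rule ennreal_leI)
      also have "\<dots> \<le> ennreal B" unfolding B_def using True K cij
        by (intro ennreal_leI divide_left_mono) auto
      finally show ?thesis .
    next
      case False thus ?thesis by (simp add: \<phi>_def)
    qed
  qed simp
  also have "\<dots> = ennreal B * emeasure M {\<omega> \<in> space M. U L n0 \<omega> = j}"
  proof -
    have Jm: "{\<omega> \<in> space M. U L n0 \<omega> = j} \<in> events" by measurable
    have "\<psi> (U L n0 \<omega>) * ennreal B = ennreal B * indicator {\<omega> \<in> space M. U L n0 \<omega> = j} \<omega>"
      if "\<omega> \<in> space M" for \<omega> using that by (simp add: \<psi>_def indicator_def)
    hence "(\<integral>\<^sup>+\<omega>. \<psi> (U L n0 \<omega>) * ennreal B \<partial>M) = (\<integral>\<^sup>+\<omega>. ennreal B * indicator {\<omega> \<in> space M. U L n0 \<omega> = j} \<omega> \<partial>M)"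
      by (rule nn_integral_cong)
    also have "\<dots> = ennreal B * emeasure M {\<omega> \<in> space M. U L n0 \<omega> = j}"
      using Jm by (simp add: nn_integral_cmult_indicator)
    finally show ?thesis .
  qed
  also have "\<dots> = ennreal (prob {\<omega> \<in> space M. U L n0 \<omega> = j} * B)"
    by (simp add: emeasure_eq_measure ennreal_mult' B0 mult.commute)
  finally have "emeasure M ?F \<le> ennreal (prob {\<omega> \<in> space M. U L n0 \<omega> = j} * B)" .
  hence "prob ?F \<le> prob {\<omega> \<in> space M. U L n0 \<omega> = j} * B"
    using B0 by (simp add: emeasure_eq_measure ennreal_le_iff)
  thus ?thesis by (simp add: n_def B_def)
qed

end

context fcfs begin

lemma ext_bound:
  assumes tail: "\<And>n u. u \<ge> 1 \<Longrightarrow> prob {\<omega> \<in> space M. real (G n u \<omega>) < c * real u} \<le> K / real u"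
    and c: "c > 1" and j: "j \<ge> 1" and K: "K \<ge> 0"
  shows "prob ({\<omega> \<in> space M. U L n0 \<omega> = j} \<inter> ext L)
           \<le> prob {\<omega> \<in> space M. U L n0 \<omega> = j} * (K * c / ((c - 1) * real j))"
proof -
  define F where "F i = {\<omega> \<in> space M. U L n0 \<omega> = j \<and> c ^ i * real j \<le> real (U L (n0 + i) \<omega>)
            \<and> real (U L (Suc (n0 + i)) \<omega>) < c * real (U L (n0 + i) \<omega>)}" for i
  define P where "P = prob {\<omega> \<in> space M. U L n0 \<omega> = j}"
  have P0: "P \<ge> 0" by (simp add: P_def)
  have "F i \<in> events" for i unfolding F_def by measurable
  hence Fm: "range F \<subseteq> events" by auto
  have Fb: "prob (F i) \<le> P * (K / real j) * (inverse c) ^ i" for i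
  proof -
    have "prob (F i) \<le> P * (K / (c ^ i * real j))"
      unfolding F_def P_def by (rule fail_bound[OF tail c j K])
    also have "\<dots> = P * (K / real j) * (inverse c) ^ i"
      using c by (simp add: power_inverse field_simps)
    finally show ?thesis .
  qed
  have ic: "norm (inverse c) < 1" using c by (simp add: inverse_less_1_iff)
  have sg: "summable (\<lambda>i. P * (K / real j) * (inverse c) ^ i)"
    by (intro summable_mult summable_geometric ic)
  have sF: "summable (\<lambda>i. prob (F i))"
    by (rule summable_comparison_test[OF _ sg]) (use Fb in auto)
  have sub: "{\<omega> \<in> space M. U L n0 \<omega> = j} \<inter> ext L \<subseteq> (\<Union>i. F i)"
  proof
    fix \<omega> assume \<omega>: "\<omega> \<in> {\<omega> \<in> space M. U L n0 \<omega> = j} \<inter> ext L"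
    show "\<omega> \<in> (\<Union>i. F i)"
    proof (rule ccontr)
      assume nF: "\<omega> \<notin> (\<Union>i. F i)"
      have grow: "c ^ i * real j \<le> real (U L (n0 + i) \<omega>)" for i
      proof (induction i)
        case 0 thus ?case using \<omega> by simp
      next
        case (Suc i)
        have "\<omega> \<notin> F i" using nF by auto
        hence "c * real (U L (n0 + i) \<omega>) \<le> real (U L (Suc (n0 + i)) \<omega>)"
          using \<omega> Suc by (auto simp: F_def not_less)
        moreover have "c * (c ^ i * real j) \<le> c * real (U L (n0 + i) \<omega>)"
          using Suc c by (intro mult_left_mono) auto
        ultimately show ?case by simp
      qed
      have ci: "1 \<le> c ^ i" for i using c by (intro one_le_power) auto
      have pos: "U L (n0 + i) \<omega> \<noteq> 0" for i
      proof -
        have "c ^ i * 1 \<le> c ^ i * real j" using j ci[of i] by (intro mult_left_mono) auto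
        hence "1 \<le> real (U L (n0 + i) \<omega>)" using grow[of i] ci[of i] by linarith
        thus ?thesis by auto
      qed
      from \<omega> obtain m where "U L m \<omega> = 0" by (auto simp: ext_def ext_iff)
      hence "U L (n0 + m) \<omega> = 0" by (rule U_absorb) simp
      thus False using pos by blast
    qed
  qed
  have "prob ({\<omega> \<in> space M. U L n0 \<omega> = j} \<inter> ext L) \<le> prob (\<Union>i. F i)"
    using Fm by (intro finite_measure_mono[OF sub]) auto
  also have "\<dots> \<le> (\<Sum>i. prob (F i))"
    by (rule finite_measure_subadditive_countably[OF Fm sF])
  also have "\<dots> \<le> (\<Sum>i. P * (K / real j) * (inverse c) ^ i)"
    by (rule suminf_le[OF Fb sF sg])
  also have "\<dots> = P * (K / real j) * (1 / (1 - inverse c))"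
    using suminf_mult[OF summable_geometric[OF ic], of "P * (K / real j)"] suminf_geometric[OF ic]
    by simp
  also have "\<dots> = P * (K * c / ((c - 1) * real j))"
    using c j by (simp add: field_simps)
  finally show ?thesis by (simp add: P_def)
qed

end

context fcfs begin

lemma partb:
  assumes mD1: "mD > 1" and mX0: "mX > 0" and rmu: "mX < mR"
    and irred: "\<And>j. j \<ge> 1 \<Longrightarrow> \<exists>n. prob {\<omega> \<in> space M. U 1 n \<omega> = j} > 0"
  shows "prob (ext 1) < 1 \<and> (\<lambda>L. prob (ext L)) \<longlonglongrightarrow> 0"
proof -
  define c where "c = min ((1 + mD) / 2) ((mX + mR) / (2 * mX))"
  define \<beta> where "\<beta> = (c * mX + mR) / 2"
  have c1: "c > 1" using mD1 mX0 rmu by (simp add: c_def field_simps)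
  have "c \<le> (1 + mD) / 2" unfolding c_def by (rule min.cobounded1)
  hence c2: "c < mD" using mD1 by (simp add: field_simps)
  have c3: "c * mX < mR"
  proof -
    have "c * mX \<le> (mX + mR) / (2 * mX) * mX" using mX0 unfolding c_def by (intro mult_right_mono min.cobounded2) auto
    also have "\<dots> = (mX + mR) / 2" using mX0 by (simp add: field_simps)
    finally show ?thesis using rmu by simp
  qed
  have cb: "c * mX < \<beta>" "\<beta> < mR" using c3 by (simp_all add: \<beta>_def)
  obtain K where tail: "\<And>n u. u \<ge> 1 \<Longrightarrow> prob {\<omega> \<in> space M. real (G n u \<omega>) < c * real u} \<le> K / real u"
    using G_tail[OF c1 c2 cb mX0] by blast
  have K: "K \<ge> 0" using order_trans[OF measure_nonneg tail[of 1 0]] by simp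
  define C where "C = K * c / (c - 1)"
  have C0: "C \<ge> 0" using K c1 by (simp add: C_def)
  have bnd: "prob ({\<omega> \<in> space M. U L n0 \<omega> = j} \<inter> ext L)
           \<le> prob {\<omega> \<in> space M. U L n0 \<omega> = j} * (C / real j)" if "j \<ge> 1" for L n0 j
    using ext_bound[OF tail c1 that K, of L n0] by (simp add: C_def)
  have lim: "(\<lambda>L. prob (ext L)) \<longlonglongrightarrow> 0"
  proof (rule tendsto_sandwich[of "\<lambda>_. 0" _ _ "\<lambda>L. C / real L"])
    show "eventually (\<lambda>L. 0 \<le> prob (ext L)) sequentially" by simp
    show "eventually (\<lambda>L. prob (ext L) \<le> C / real L) sequentially"
    proof (rule eventually_sequentiallyI[of 1])
      fix L :: nat assume L: "L \<ge> 1"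
      have "{\<omega> \<in> space M. U L 0 \<omega> = L} = space M" by auto
      hence "ext L = {\<omega> \<in> space M. U L 0 \<omega> = L} \<inter> ext L" by (auto simp: ext_def)
      hence "prob (ext L) \<le> prob {\<omega> \<in> space M. U L 0 \<omega> = L} * (C / real L)"
        using bnd[OF L, of L 0] by simp
      also have "\<dots> \<le> 1 * (C / real L)" using C0 by (intro mult_right_mono) auto
      finally show "prob (ext L) \<le> C / real L" by simp
    qed
  qed (auto intro: lim_const_over_n)
  define j where "j = nat \<lceil>2 * C\<rceil> + 1"
  have j1: "j \<ge> 1" by (simp add: j_def)
  have "real j > 2 * C" unfolding j_def by linarith
  hence Cj: "C / real j < 1 / 2" using j1 by (simp add: field_simps)
  obtain n0 where pA: "prob {\<omega> \<in> space M. U 1 n0 \<omega> = j} > 0" using irred[OF j1] by blast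
  define A where "A = {\<omega> \<in> space M. U 1 n0 \<omega> = j}"
  have Am: "A \<in> events" unfolding A_def by measurable
  have "ext 1 \<subseteq> (A \<inter> ext 1) \<union> (space M - A)" by (auto simp: ext_def)
  hence "prob (ext 1) \<le> prob ((A \<inter> ext 1) \<union> (space M - A))"
    using Am ext_sets' by (intro finite_measure_mono) auto
  also have "\<dots> \<le> prob (A \<inter> ext 1) + prob (space M - A)"
    using Am ext_sets' by (intro measure_Un_le) auto
  also have "prob (A \<inter> ext 1) \<le> prob A * (C / real j)" unfolding A_def by (rule bnd[OF j1])
  also have "prob (space M - A) = 1 - prob A" using Am by (simp add: prob_compl)
  also have "prob A * (C / real j) \<le> prob A * (1/2)" using Cj by (intro mult_left_mono) auto
  finally have "prob (ext 1) \<le> 1 - prob A / 2" by simp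
  moreover have "prob A > 0" using pA by (simp add: A_def)
  ultimately have "prob (ext 1) < 1" by simp
  with lim show ?thesis by simp
qed

end

lemma count_le_card:
  assumes "\<And>j. j \<ge> 1 \<Longrightarrow> y j \<le> x j" "\<And>j. j \<ge> 1 \<Longrightarrow> 0 \<le> y j"
  shows "fcfs_count t x s \<le> card {k \<in> {1..t}. (\<Sum>j=1..k-1. y j) \<le> s}"
proof (cases "t = 0 \<or> x 1 > s")
  case True thus ?thesis by (auto simp: fcfs_count_def)
next
  case False
  let ?S = "{k \<in> {1..t}. (\<Sum>j=1..k. x j) \<le> s}"
  let ?T = "{k \<in> {1..t}. (\<Sum>j=1..k-1. y j) \<le> s}"
  have ne: "1 \<in> ?S" using False by auto
  have fin: "finite ?S" by auto
  define m where "m = Max ?S"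
  have mS: "m \<in> ?S" unfolding m_def using ne fin by (intro Max_in) auto
  have "{1..m} \<subseteq> ?T"
  proof
    fix k assume k: "k \<in> {1..m}"
    have "(\<Sum>j=1..k-1. y j) \<le> (\<Sum>j=1..m. y j)"
      using k assms(2) by (intro sum_mono2) auto
    also have "\<dots> \<le> (\<Sum>j=1..m. x j)" using assms(1) by (intro sum_mono) auto
    also have "\<dots> \<le> s" using mS by auto
    finally show "k \<in> ?T" using k mS by auto
  qed
  hence "card {1..m} \<le> card ?T" by (intro card_mono) auto
  thus ?thesis using False by (simp add: fcfs_count_def m_def)
qed

lemma wald_pw:
  fixes y :: "nat \<Rightarrow> real"
  assumes "\<And>j. 0 \<le> y j" "\<And>j. y j \<le> a" "0 \<le> s" "0 \<le> a"
  shows "(\<Sum>k=1..t. y k * (if (\<Sum>j=1..k-1. y j) \<le> s then 1 else 0)) \<le> s + a \<and>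
         (\<Sum>k=1..t. y k * (if (\<Sum>j=1..k-1. y j) \<le> s then 1 else 0)) \<le> (\<Sum>j=1..t. y j)"
proof (induction t)
  case 0 thus ?case using assms by simp
next
  case (Suc t)
  let ?f = "\<lambda>k. y k * (if (\<Sum>j=1..k-1. y j) \<le> s then 1 else 0)"
  have e: "(\<Sum>k=1..Suc t. ?f k) = (\<Sum>k=1..t. ?f k) + ?f (Suc t)" by simp
  have e2: "(\<Sum>j=1..Suc t. y j) = (\<Sum>j=1..t. y j) + y (Suc t)" by simp
  show ?case
  proof (cases "(\<Sum>j=1..t. y j) \<le> s")
    case True
    hence "?f (Suc t) = y (Suc t)" by simp
    thus ?thesis using Suc.IH True assms(2)[of "Suc t"] unfolding e e2 by linarith
  next
    case False
    hence "?f (Suc t) = 0" by simp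
    thus ?thesis using Suc.IH assms(1)[of "Suc t"] unfolding e e2 by linarith
  qed
qed

context fcfs begin

definition ind :: "nat \<Rightarrow> nat \<Rightarrow> real \<Rightarrow> nat \<Rightarrow> 'a \<Rightarrow> bool" where
  "ind n u a k \<omega> = (k \<le> (\<Sum>j=1..u. D n j \<omega>) \<and>
      (\<Sum>j=1..k-1. min (X n j \<omega>) a) \<le> (\<Sum>j=1..u. R n j \<omega>))"

definition indv :: "nat \<Rightarrow> nat \<Rightarrow> real \<Rightarrow> nat \<Rightarrow> (idx \<Rightarrow> real) \<Rightarrow> bool" where
  "indv n u a k v = (k \<le> (\<Sum>j=1..u. Dv n j v) \<and>
      (\<Sum>j=1..k-1. min (Xv n j v) a) \<le> (\<Sum>j=1..u. Rv n j v))"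

lemma ind_meas[measurable]: "Measurable.pred M (ind n u a k)"
  unfolding ind_def[abs_def] using D_meas X_meas R_meas by measurable

lemma indep_ind_Y:
  assumes k: "k \<ge> 1"
  shows "(\<integral>\<^sup>+\<omega>. (if ind n u a k \<omega> then 1 else 0) * ennreal (min (X n k \<omega>) a) \<partial>M)
       = (\<integral>\<^sup>+\<omega>. (if ind n u a k \<omega> then 1 else 0) \<partial>M) * (\<integral>\<^sup>+\<omega>. ennreal (min (X 0 1 \<omega>) a) \<partial>M)"
proof -
  define A where "A = (\<lambda>j. Inl (n,j)) ` {1..u} \<union> (\<lambda>j. Inr (Inr (n,j))) ` {1..u} \<union> (\<lambda>j. Inr (Inl (n,j))) ` {1..<k}"
  define B where "B = {Inr (Inl (n,k)) :: idx}"
  have AB: "A \<inter> B = {}" "A \<subseteq> Idx" "B \<subseteq> Idx" using k by (auto simp: A_def B_def Idx_def)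
  define h where "h p = (if indv n u a k (fst p) then 1 else 0) * ennreal (min (Xv n k (snd p)) a)" for p
  have hm: "h \<in> borel_measurable (PiM A (\<lambda>_. borel) \<Otimes>\<^sub>M PiM B (\<lambda>_. borel))"
    unfolding h_def indv_def by measurable
  have iA: "indv n u a k (Yv A \<omega>) = ind n u a k \<omega>" for \<omega>
  proof -
    have "(\<Sum>j=1..u. Dv n j (Yv A \<omega>)) = (\<Sum>j=1..u. D n j \<omega>)"
      by (intro sum.cong) (auto simp: A_def Dv_Y)
    moreover have "(\<Sum>j=1..u. Rv n j (Yv A \<omega>)) = (\<Sum>j=1..u. R n j \<omega>)"
      by (intro sum.cong) (auto simp: A_def Rv_Y)
    moreover have "(\<Sum>j=1..k-1. min (Xv n j (Yv A \<omega>)) a) = (\<Sum>j=1..k-1. min (X n j \<omega>) a)"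
      by (intro sum.cong) (auto simp: A_def Xv_Y)
    ultimately show ?thesis by (simp add: indv_def ind_def)
  qed
  have xB: "Xv n k (Yv B \<omega>) = X n k \<omega>" for \<omega> by (simp add: B_def Xv_Y)
  have "(\<integral>\<^sup>+\<omega>. (if ind n u a k \<omega> then 1 else 0) * ennreal (min (X n k \<omega>) a) \<partial>M)
      = (\<integral>\<^sup>+\<omega>. h (Yv A \<omega>, Yv B \<omega>) \<partial>M)"
    by (simp add: h_def iA xB)
  also have "\<dots> = (\<integral>\<^sup>+\<omega>. (\<integral>\<^sup>+\<omega>'. h (Yv A \<omega>, Yv B \<omega>') \<partial>M) \<partial>M)"
    by (rule split_nn[OF AB hm])
  also have "\<dots> = (\<integral>\<^sup>+\<omega>. (if ind n u a k \<omega> then 1 else 0) * (\<integral>\<^sup>+\<omega>'. ennreal (min (X n k \<omega>') a) \<partial>M) \<partial>M)"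
  proof -
    have m: "(\<lambda>\<omega>'. ennreal (min (X n k \<omega>') a)) \<in> borel_measurable M" using X_meas[of n k] by measurable
    show ?thesis by (simp add: h_def iA xB nn_integral_cmult[OF m])
  qed
  also have "(\<integral>\<^sup>+\<omega>'. ennreal (min (X n k \<omega>') a) \<partial>M) = (\<integral>\<^sup>+\<omega>. ennreal (min (X 0 1 \<omega>) a) \<partial>M)"
    using X_transfer_nn[OF k, of "\<lambda>x. ennreal (min x a)" n] by simp
  also have "(\<integral>\<^sup>+\<omega>. (if ind n u a k \<omega> then 1 else 0) * (\<integral>\<^sup>+\<omega>. ennreal (min (X 0 1 \<omega>) a) \<partial>M) \<partial>M)
      = (\<integral>\<^sup>+\<omega>. (if ind n u a k \<omega> then 1 else 0) \<partial>M) * (\<integral>\<^sup>+\<omega>. ennreal (min (X 0 1 \<omega>) a) \<partial>M)"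
    by (rule nn_integral_multc) measurable
  finally show ?thesis .
qed

end

context fcfs begin

lemma ER_nn: "(\<integral>\<^sup>+\<omega>. ennreal (R n j \<omega>) \<partial>M) = ennreal mR" if "j \<ge> 1" for n j
proof -
  have "(\<integral>\<^sup>+\<omega>. ennreal (R n j \<omega>) \<partial>M) = (\<integral>\<^sup>+\<omega>. ennreal (R 0 1 \<omega>) \<partial>M)"
    using R_transfer_nn[OF that, of ennreal n] by simp
  also have "\<dots> = ennreal mR"
    using R_int R_nonneg by (intro nn_integral_eq_integral) auto
  finally show ?thesis .
qed

lemma G_mean:
  assumes a: "a \<ge> 0"
  shows "(\<integral>\<^sup>+\<omega>. ennreal (min (X 0 1 \<omega>) a) \<partial>M) * (\<integral>\<^sup>+\<omega>. ennreal (real (G n u \<omega>)) \<partial>M)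
           \<le> ennreal (real u * mR + a)"
proof -
  define T where "T i \<omega> = (if ind n u a (Suc i) \<omega> then 1 else 0 :: ennreal)" for i \<omega>
  define \<mu>e where "\<mu>e = (\<integral>\<^sup>+\<omega>. ennreal (min (X 0 1 \<omega>) a) \<partial>M)"
  have Tm[measurable]: "T i \<in> borel_measurable M" for i unfolding T_def by measurable
  have Xm[measurable]: "X n k \<in> borel_measurable M" for k using X_meas by simp
  have Rm[measurable]: "R n k \<in> borel_measurable M" for k using R_meas by simp
  have step1: "ennreal (real (G n u \<omega>)) \<le> (\<Sum>i. T i \<omega>)" if \<omega>: "\<omega> \<in> space M" for \<omega>
  proof -
    define t where "t = (\<Sum>j=1..u. D n j \<omega>)"
    define s where "s = (\<Sum>j=1..u. R n j \<omega>)"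
    define P where "P k = ((\<Sum>j=1..k-1. min (X n j \<omega>) a) \<le> s)" for k
    have "G n u \<omega> \<le> card {k \<in> {1..t}. P k}"
      unfolding G_def t_def s_def P_def
      by (rule count_le_card) (use \<omega> X_nonneg a in auto)
    hence "ennreal (real (G n u \<omega>)) \<le> ennreal (real (card {k \<in> {1..t}. P k}))" by simp
    also have "real (card {k \<in> {1..t}. P k}) = (\<Sum>k=1..t. if P k then 1 else 0)"
      by (simp add: sum.inter_filter[symmetric])
    also have "\<dots> = (\<Sum>i<t. if P (Suc i) then 1 else 0)"
      by (simp add: sum.atLeast1_atMost_eq)
    also have "ennreal \<dots> = (\<Sum>i<t. ennreal (if P (Suc i) then 1 else 0))"
      by (rule sum_ennreal[symmetric]) simp
    also have "\<dots> = (\<Sum>i<t. T i \<omega>)"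
      by (intro sum.cong) (auto simp: T_def ind_def P_def t_def s_def)
    also have "\<dots> = (\<Sum>i. T i \<omega>)"
      by (rule suminf_finite[symmetric]) (auto simp: T_def ind_def t_def)
    finally show ?thesis .
  qed
  have pw: "(\<Sum>i. T i \<omega> * ennreal (min (X n (Suc i) \<omega>) a)) \<le> ennreal ((\<Sum>j=1..u. R n j \<omega>) + a)"
    if \<omega>: "\<omega> \<in> space M" for \<omega>
  proof -
    define t where "t = (\<Sum>j=1..u. D n j \<omega>)"
    define s where "s = (\<Sum>j=1..u. R n j \<omega>)"
    define y where "y j = min (X n j \<omega>) a" for j
    have s0: "s \<ge> 0" unfolding s_def using \<omega> R_nonneg by (intro sum_nonneg) auto
    have y0: "0 \<le> y j" "y j \<le> a" for j using \<omega> X_nonneg a by (auto simp: y_def)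
    have "(\<Sum>i. T i \<omega> * ennreal (min (X n (Suc i) \<omega>) a)) = (\<Sum>i<t. T i \<omega> * ennreal (y (Suc i)))"
      by (subst suminf_finite[where N="{..<t}"]) (auto simp: T_def ind_def t_def y_def)
    also have "\<dots> = (\<Sum>i<t. ennreal (y (Suc i) * (if (\<Sum>j=1..Suc i-1. y j) \<le> s then 1 else 0)))"
      by (intro sum.cong) (auto simp: T_def ind_def t_def s_def y_def)
    also have "\<dots> = ennreal (\<Sum>i<t. y (Suc i) * (if (\<Sum>j=1..Suc i-1. y j) \<le> s then 1 else 0))"
      by (rule sum_ennreal) (simp add: y0)
    also have "(\<Sum>i<t. y (Suc i) * (if (\<Sum>j=1..Suc i-1. y j) \<le> s then 1 else 0))
        = (\<Sum>k=1..t. y k * (if (\<Sum>j=1..k-1. y j) \<le> s then 1 else 0))"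
      by (simp add: sum.atLeast1_atMost_eq)
    also have "ennreal \<dots> \<le> ennreal (s + a)"
      using wald_pw[of y a s t] y0 s0 a by (intro ennreal_leI) auto
    finally show ?thesis by (simp add: s_def)
  qed
  have "\<mu>e * (\<integral>\<^sup>+\<omega>. ennreal (real (G n u \<omega>)) \<partial>M) \<le> \<mu>e * (\<integral>\<^sup>+\<omega>. (\<Sum>i. T i \<omega>) \<partial>M)"
    by (intro mult_left_mono nn_integral_mono step1) auto
  also have "\<dots> = \<mu>e * (\<Sum>i. (\<integral>\<^sup>+\<omega>. T i \<omega> \<partial>M))"
    by (simp add: nn_integral_suminf)
  also have "\<dots> = (\<Sum>i. (\<integral>\<^sup>+\<omega>. T i \<omega> \<partial>M) * \<mu>e)"
    by (simp add: mult.commute)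
  also have "\<dots> = (\<Sum>i. (\<integral>\<^sup>+\<omega>. T i \<omega> * ennreal (min (X n (Suc i) \<omega>) a) \<partial>M))"
    unfolding \<mu>e_def T_def by (intro suminf_cong indep_ind_Y[symmetric]) simp
  also have "\<dots> = (\<integral>\<^sup>+\<omega>. (\<Sum>i. T i \<omega> * ennreal (min (X n (Suc i) \<omega>) a)) \<partial>M)"
    by (rule nn_integral_suminf[symmetric]) measurable
  also have "\<dots> \<le> (\<integral>\<^sup>+\<omega>. ennreal ((\<Sum>j=1..u. R n j \<omega>) + a) \<partial>M)"
    by (intro nn_integral_mono pw) auto
  also have "\<dots> = (\<integral>\<^sup>+\<omega>. (\<Sum>j=1..u. ennreal (R n j \<omega>)) + ennreal a \<partial>M)"
    using R_nonneg a by (intro nn_integral_cong) (subst ennreal_plus, auto simp: sum_nonneg)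
  also have "\<dots> = (\<Sum>j=1..u. \<integral>\<^sup>+\<omega>. ennreal (R n j \<omega>) \<partial>M) + ennreal a"
    by (simp add: nn_integral_add nn_integral_sum emeasure_space_1)
  also have "\<dots> = (\<Sum>j=1..u. ennreal mR) + ennreal a"
    by (simp add: ER_nn)
  also have "\<dots> = ennreal (real u * mR + a)"
  proof -
    have mR0: "mR \<ge> 0" using R_nonneg by (intro integral_nonneg_AE) auto
    thus ?thesis using a by (simp add: ennreal_plus ennreal_mult ennreal_of_nat_eq_real_of_nat)
  qed
  finally show ?thesis by (simp add: \<mu>e_def)
qed

end

context fcfs begin

abbreviation "p0 \<equiv> prob {\<omega> \<in> space M. D 0 1 \<omega> = 0}"

lemma G0_prob: "prob {\<omega> \<in> space M. G n a \<omega> = 0} \<ge> p0 ^ a"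
proof (cases "a = 0")
  case True thus ?thesis by (simp add: prob_space)
next
  case False
  define J :: "idx set" where "J = (\<lambda>j. Inl (n, j)) ` {1..a}"
  have J: "J \<noteq> {}" "finite J" "J \<subseteq> Idx" using False by (auto simp: J_def Idx_def)
  have "prob (\<Inter>i\<in>J. V i -` {0} \<inter> space M) = (\<Prod>i\<in>J. prob (V i -` {0} \<inter> space M))"
    by (rule indep_varsD[OF indep_V J]) simp
  also have "\<dots> = (\<Prod>j\<in>{1..a}. prob (V (Inl (n, j)) -` {0} \<inter> space M))"
    unfolding J_def by (subst prod.reindex) (auto simp: inj_on_def)
  also have "\<dots> = (\<Prod>j\<in>{1..a}. p0)"
  proof (intro prod.cong refl)
    fix j assume j: "j \<in> {1..a}"
    have "V (Inl (n, j)) -` {0} \<inter> space M = {\<omega> \<in> space M. D n j \<omega> = 0}"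
      by (auto simp: V_def)
    thus "prob (V (Inl (n, j)) -` {0} \<inter> space M) = p0" using D_prob[of j n 0] j by simp
  qed
  also have "\<dots> = p0 ^ a" by simp
  finally have eq: "prob (\<Inter>i\<in>J. V i -` {0} \<inter> space M) = p0 ^ a" .
  have sub: "(\<Inter>i\<in>J. V i -` {0} \<inter> space M) \<subseteq> {\<omega> \<in> space M. G n a \<omega> = 0}"
  proof
    fix \<omega> assume "\<omega> \<in> (\<Inter>i\<in>J. V i -` {0} \<inter> space M)"
    hence "\<forall>j\<in>{1..a}. D n j \<omega> = 0" "\<omega> \<in> space M" using J(1) by (auto simp: J_def V_def)
    thus "\<omega> \<in> {\<omega> \<in> space M. G n a \<omega> = 0}" by (simp add: G_def)
  qed
  have "{\<omega> \<in> space M. G n a \<omega> = 0} \<in> events" by measurable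
  from finite_measure_mono[OF sub this] eq show ?thesis by simp
qed

lemma step_zero:
  assumes K0: "K0 \<ge> 1"
  shows "prob {\<omega> \<in> space M. U L (Suc n) \<omega> = 0} \<ge>
     prob {\<omega> \<in> space M. U L n \<omega> = 0} + p0 ^ K0 * prob {\<omega> \<in> space M. 1 \<le> U L n \<omega> \<and> U L n \<omega> \<le> K0}"
proof -
  define \<phi> :: "nat \<Rightarrow> nat \<Rightarrow> ennreal" where "\<phi> a b = (if b = 0 then 1 else 0)" for a b
  define q where "q = p0 ^ K0"
  have p01: "0 \<le> p0" "p0 \<le> 1" by auto
  have q0: "q \<ge> 0" unfolding q_def using p01 by simp
  have Z0: "{\<omega> \<in> space M. U L (Suc n) \<omega> = 0} \<in> events" by measurable
  have Zn: "{\<omega> \<in> space M. U L n \<omega> = 0} \<in> events" by measurable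
  have Bn: "{\<omega> \<in> space M. 1 \<le> U L n \<omega> \<and> U L n \<omega> \<le> K0} \<in> events" by measurable
  have "emeasure M {\<omega> \<in> space M. U L (Suc n) \<omega> = 0} = (\<integral>\<^sup>+\<omega>. (\<lambda>_. 1) (U L n \<omega>) * \<phi> (U L n \<omega>) (G n (U L n \<omega>) \<omega>) \<partial>M)"
  proof -
    have "indicator {\<omega> \<in> space M. U L (Suc n) \<omega> = 0} \<omega> = (\<lambda>_. 1) (U L n \<omega>) * \<phi> (U L n \<omega>) (G n (U L n \<omega>) \<omega>)"
      if "\<omega> \<in> space M" for \<omega>
      using that unfolding U_Suc by (simp add: \<phi>_def indicator_def)
    hence "(\<integral>\<^sup>+\<omega>. indicator {\<omega> \<in> space M. U L (Suc n) \<omega> = 0} \<omega> \<partial>M) = (\<integral>\<^sup>+\<omega>. (\<lambda>_. 1) (U L n \<omega>) * \<phi> (U L n \<omega>) (G n (U L n \<omega>) \<omega>) \<partial>M)"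
      by (rule nn_integral_cong)
    thus ?thesis by (rule trans[OF nn_integral_indicator[OF Z0, symmetric]])
  qed
  also have "\<dots> = (\<integral>\<^sup>+\<omega>. (\<lambda>_. 1) (U L n \<omega>) * (\<integral>\<^sup>+\<omega>'. \<phi> (U L n \<omega>) (G n (U L n \<omega>) \<omega>') \<partial>M) \<partial>M)"
    by (rule step_nn[of n n]) simp
  also have "\<dots> \<ge> (\<integral>\<^sup>+\<omega>. indicator {\<omega> \<in> space M. U L n \<omega> = 0} \<omega> + ennreal q * indicator {\<omega> \<in> space M. 1 \<le> U L n \<omega> \<and> U L n \<omega> \<le> K0} \<omega> \<partial>M)"
  proof (intro nn_integral_mono)
    fix \<omega> assume \<omega>: "\<omega> \<in> space M"
    let ?a = "U L n \<omega>"
    have Sm: "{\<omega>' \<in> space M. G n ?a \<omega>' = 0} \<in> events" by measurable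
    have "(\<integral>\<^sup>+\<omega>'. \<phi> ?a (G n ?a \<omega>') \<partial>M) = (\<integral>\<^sup>+\<omega>'. indicator {\<omega>' \<in> space M. G n ?a \<omega>' = 0} \<omega>' \<partial>M)"
      by (intro nn_integral_cong) (simp add: \<phi>_def indicator_def)
    also have "\<dots> = ennreal (prob {\<omega>' \<in> space M. G n ?a \<omega>' = 0})"
      using Sm by (simp add: emeasure_eq_measure)
    finally have I: "(\<integral>\<^sup>+\<omega>'. \<phi> ?a (G n ?a \<omega>') \<partial>M) = ennreal (prob {\<omega>' \<in> space M. G n ?a \<omega>' = 0})" .
    show "indicator {\<omega> \<in> space M. U L n \<omega> = 0} \<omega> + ennreal q * indicator {\<omega> \<in> space M. 1 \<le> U L n \<omega> \<and> U L n \<omega> \<le> K0} \<omega>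
        \<le> (\<lambda>_. 1) (U L n \<omega>) * (\<integral>\<^sup>+\<omega>'. \<phi> (U L n \<omega>) (G n (U L n \<omega>) \<omega>') \<partial>M)"
    proof (cases "?a = 0")
      case True
      have "{\<omega>' \<in> space M. G n ?a \<omega>' = 0} = space M" using True by auto
      thus ?thesis using True \<omega> I by (simp add: indicator_def prob_space)
    next
      case False
      have "ennreal q * indicator {\<omega> \<in> space M. 1 \<le> U L n \<omega> \<and> U L n \<omega> \<le> K0} \<omega> \<le> ennreal (p0 ^ ?a)"
      proof (cases "?a \<le> K0")
        case True
        have "q \<le> p0 ^ ?a" unfolding q_def using True p01 by (intro power_decreasing) auto
        thus ?thesis using \<omega> by (simp add: indicator_def)
      qed (simp add: indicator_def)
      also have "\<dots> \<le> ennreal (prob {\<omega>' \<in> space M. G n ?a \<omega>' = 0})"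
        by (intro ennreal_leI G0_prob)
      finally show ?thesis using False \<omega> I by (simp add: indicator_def)
    qed
  qed
  also have "(\<integral>\<^sup>+\<omega>. indicator {\<omega> \<in> space M. U L n \<omega> = 0} \<omega> + ennreal q * indicator {\<omega> \<in> space M. 1 \<le> U L n \<omega> \<and> U L n \<omega> \<le> K0} \<omega> \<partial>M)
     = ennreal (prob {\<omega> \<in> space M. U L n \<omega> = 0} + q * prob {\<omega> \<in> space M. 1 \<le> U L n \<omega> \<and> U L n \<omega> \<le> K0})"
    using Zn Bn q0 by (simp add: nn_integral_add nn_integral_cmult emeasure_eq_measure ennreal_mult ennreal_plus)
  finally have F: "ennreal (prob {\<omega> \<in> space M. U L n \<omega> = 0} + q * prob {\<omega> \<in> space M. 1 \<le> U L n \<omega> \<and> U L n \<omega> \<le> K0})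
      \<le> emeasure M {\<omega> \<in> space M. U L (Suc n) \<omega> = 0}" .
  have "ennreal (prob {\<omega> \<in> space M. U L n \<omega> = 0} + q * prob {\<omega> \<in> space M. 1 \<le> U L n \<omega> \<and> U L n \<omega> \<le> K0})
      \<le> ennreal (prob {\<omega> \<in> space M. U L (Suc n) \<omega> = 0})"
    using F by (simp only: emeasure_eq_measure)
  hence "prob {\<omega> \<in> space M. U L n \<omega> = 0} + q * prob {\<omega> \<in> space M. 1 \<le> U L n \<omega> \<and> U L n \<omega> \<le> K0}
      \<le> prob {\<omega> \<in> space M. U L (Suc n) \<omega> = 0}"
    using ennreal_le_iff[OF measure_nonneg] by blast
  thus ?thesis by (simp only: q_def)
qed

end

context fcfs begin

lemma exists_a:
  assumes rmu: "mR < mX"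
  shows "\<exists>a\<ge>0. ennreal mR < (\<integral>\<^sup>+\<omega>. ennreal (min (X 0 1 \<omega>) a) \<partial>M)"
proof -
  define f where "f k \<omega> = ennreal (min (X 0 1 \<omega>) (real k))" for k \<omega>
  have Xm[measurable]: "X 0 1 \<in> borel_measurable M" using X_meas by simp
  have fm[measurable]: "f k \<in> borel_measurable M" for k unfolding f_def by measurable
  have inc: "incseq f" unfolding f_def incseq_def le_fun_def
    by (auto intro!: ennreal_leI)
  have sup: "(SUP k. f k \<omega>) = ennreal (X 0 1 \<omega>)" if \<omega>: "\<omega> \<in> space M" for \<omega>
  proof (rule antisym)
    show "(SUP k. f k \<omega>) \<le> ennreal (X 0 1 \<omega>)"
      by (intro SUP_least) (auto simp: f_def intro!: ennreal_leI)
    have "X 0 1 \<omega> \<le> real (nat \<lceil>X 0 1 \<omega>\<rceil>)" by linarith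
    hence "f (nat \<lceil>X 0 1 \<omega>\<rceil>) \<omega> = ennreal (X 0 1 \<omega>)" by (simp add: f_def min_def)
    thus "ennreal (X 0 1 \<omega>) \<le> (SUP k. f k \<omega>)" by (metis SUP_upper UNIV_I)
  qed
  have "(SUP k. \<integral>\<^sup>+\<omega>. f k \<omega> \<partial>M) = (\<integral>\<^sup>+\<omega>. (SUP k. f k \<omega>) \<partial>M)"
    by (rule nn_integral_monotone_convergence_SUP[symmetric]) (use inc in auto)
  also have "\<dots> = (\<integral>\<^sup>+\<omega>. ennreal (X 0 1 \<omega>) \<partial>M)"
    by (intro nn_integral_cong) (simp add: sup)
  also have "\<dots> = ennreal mX"
    using X_int X_nonneg by (intro nn_integral_eq_integral) auto
  finally have eq: "(SUP k. \<integral>\<^sup>+\<omega>. f k \<omega> \<partial>M) = ennreal mX" .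
  have mR0: "mR \<ge> 0" using R_nonneg by (intro integral_nonneg_AE) auto
  have "ennreal mR < ennreal mX" using rmu mR0 by (intro ennreal_lessI) auto
  hence "ennreal mR < (SUP k. \<integral>\<^sup>+\<omega>. f k \<omega> \<partial>M)" using eq by simp
  then obtain k where "ennreal mR < (\<integral>\<^sup>+\<omega>. f k \<omega> \<partial>M)" by (auto simp: less_SUP_iff)
  thus ?thesis unfolding f_def by (intro exI[of _ "real k"]) auto
qed

lemma EU_bound:
  assumes a: "a \<ge> 0" and mu': "ennreal mR < (\<integral>\<^sup>+\<omega>. ennreal (min (X 0 1 \<omega>) a) \<partial>M)"
  shows "\<exists>Bd\<ge>0. \<forall>n. (\<integral>\<^sup>+\<omega>. ennreal (real (U L n \<omega>)) \<partial>M) \<le> ennreal Bd"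
proof -
  define \<mu>e where "\<mu>e = (\<integral>\<^sup>+\<omega>. ennreal (min (X 0 1 \<omega>) a) \<partial>M)"
  have Xm[measurable]: "X 0 1 \<in> borel_measurable M" using X_meas by simp
  have mR0: "mR \<ge> 0" using R_nonneg by (intro integral_nonneg_AE) auto
  have "\<mu>e \<le> (\<integral>\<^sup>+\<omega>. ennreal a \<partial>M)" unfolding \<mu>e_def by (intro nn_integral_mono ennreal_leI) auto
  also have "\<dots> = ennreal a" by (simp add: emeasure_space_1)
  finally have "\<mu>e < top" by (simp add: le_less_trans)
  then obtain \<mu>' where \<mu>': "\<mu>e = ennreal \<mu>'" "\<mu>' \<ge> 0" by (cases \<mu>e) auto
  have \<mu>r: "mR < \<mu>'" using mu' \<mu>' mR0 unfolding \<mu>e_def[symmetric] by (simp add: ennreal_less_iff)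
  have \<mu>p: "\<mu>' > 0" using \<mu>r mR0 by simp
  have Gb: "(\<integral>\<^sup>+\<omega>. ennreal (real (G n u \<omega>)) \<partial>M) \<le> ennreal ((real u * mR + a) / \<mu>')" for n u
  proof -
    let ?I = "(\<integral>\<^sup>+\<omega>. ennreal (real (G n u \<omega>)) \<partial>M)"
    have h: "ennreal \<mu>' * ?I \<le> ennreal (real u * mR + a)"
      using G_mean[OF a, of n u] \<mu>' by (simp add: \<mu>e_def)
    have "?I = ennreal (1 / \<mu>') * (ennreal \<mu>' * ?I)"
      using \<mu>p by (simp add: mult.assoc[symmetric] ennreal_mult[symmetric])
    also have "\<dots> \<le> ennreal (1 / \<mu>') * ennreal (real u * mR + a)"
      by (intro mult_left_mono h) auto
    also have "\<dots> = ennreal (1 / \<mu>' * (real u * mR + a))"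
      using \<mu>p mR0 a by (intro ennreal_mult[symmetric]) auto
    also have "\<dots> = ennreal ((real u * mR + a) / \<mu>')" by simp
    finally show ?thesis .
  qed
  define Bd where "Bd = max (real L) (a / (\<mu>' - mR))"
  have Bd0: "Bd \<ge> 0" by (simp add: Bd_def)
  have key: "mR / \<mu>' * Bd + a / \<mu>' \<le> Bd"
  proof -
    have "a / (\<mu>' - mR) \<le> Bd" by (simp add: Bd_def)
    hence "a \<le> (\<mu>' - mR) * Bd" using \<mu>r by (simp add: field_simps)
    hence "mR * Bd + a \<le> \<mu>' * Bd" by (simp add: algebra_simps)
    thus ?thesis using \<mu>p by (simp add: field_simps)
  qed
  have "(\<integral>\<^sup>+\<omega>. ennreal (real (U L n \<omega>)) \<partial>M) \<le> ennreal Bd" for n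
  proof (induction n)
    case 0
    show ?case by (simp add: emeasure_space_1 Bd_def)
  next
    case (Suc n)
    define \<phi> :: "nat \<Rightarrow> nat \<Rightarrow> ennreal" where "\<phi> x y = ennreal (real y)" for x y
    have "(\<integral>\<^sup>+\<omega>. ennreal (real (U L (Suc n) \<omega>)) \<partial>M)
        = (\<integral>\<^sup>+\<omega>. (\<lambda>_. 1) (U L n \<omega>) * \<phi> (U L n \<omega>) (G n (U L n \<omega>) \<omega>) \<partial>M)"
      unfolding U_Suc by (simp add: \<phi>_def)
    also have "\<dots> = (\<integral>\<^sup>+\<omega>. (\<lambda>_. 1) (U L n \<omega>) * (\<integral>\<^sup>+\<omega>'. \<phi> (U L n \<omega>) (G n (U L n \<omega>) \<omega>') \<partial>M) \<partial>M)"
      by (rule step_nn[of n n]) simp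
    also have "\<dots> \<le> (\<integral>\<^sup>+\<omega>. ennreal (mR / \<mu>') * ennreal (real (U L n \<omega>)) + ennreal (a / \<mu>') \<partial>M)"
    proof (intro nn_integral_mono)
      fix \<omega>
      have "(\<integral>\<^sup>+\<omega>'. \<phi> (U L n \<omega>) (G n (U L n \<omega>) \<omega>') \<partial>M) \<le> ennreal ((real (U L n \<omega>) * mR + a) / \<mu>')"
        unfolding \<phi>_def by (rule Gb)
      also have "\<dots> = ennreal (mR / \<mu>' * real (U L n \<omega>) + a / \<mu>')"
        by (simp add: add_divide_distrib mult.commute)
      also have "\<dots> = ennreal (mR / \<mu>' * real (U L n \<omega>)) + ennreal (a / \<mu>')"
        using \<mu>p mR0 a by (intro ennreal_plus) auto
      also have "ennreal (mR / \<mu>' * real (U L n \<omega>)) = ennreal (mR / \<mu>') * ennreal (real (U L n \<omega>))"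
        using \<mu>p mR0 by (intro ennreal_mult) auto
      finally show "(\<lambda>_. 1) (U L n \<omega>) * (\<integral>\<^sup>+\<omega>'. \<phi> (U L n \<omega>) (G n (U L n \<omega>) \<omega>') \<partial>M)
          \<le> ennreal (mR / \<mu>') * ennreal (real (U L n \<omega>)) + ennreal (a / \<mu>')" by simp
    qed
    also have "\<dots> = ennreal (mR / \<mu>') * (\<integral>\<^sup>+\<omega>. ennreal (real (U L n \<omega>)) \<partial>M) + ennreal (a / \<mu>')"
      by (simp add: nn_integral_add nn_integral_cmult emeasure_space_1)
    also have "\<dots> \<le> ennreal (mR / \<mu>') * ennreal Bd + ennreal (a / \<mu>')"
      by (intro add_mono mult_left_mono Suc.IH) auto
    also have "ennreal (mR / \<mu>') * ennreal Bd = ennreal (mR / \<mu>' * Bd)"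
      using \<mu>p mR0 Bd0 by (intro ennreal_mult[symmetric]) auto
    also have "ennreal (mR / \<mu>' * Bd) + ennreal (a / \<mu>') = ennreal (mR / \<mu>' * Bd + a / \<mu>')"
      using \<mu>p mR0 a Bd0 by (intro ennreal_plus[symmetric]) auto
    also have "\<dots> \<le> ennreal Bd" using key by (rule ennreal_leI)
    finally show ?case .
  qed
  thus ?thesis using Bd0 by blast
qed

end

context fcfs begin

lemma parta:
  assumes rmu: "mR < mX" and p0: "p0 > 0"
  shows "prob (ext L) = 1"
proof -
  obtain a where a: "a \<ge> 0" "ennreal mR < (\<integral>\<^sup>+\<omega>. ennreal (min (X 0 1 \<omega>) a) \<partial>M)"
    using exists_a[OF rmu] by blast
  obtain Bd where Bd: "Bd \<ge> 0" "\<And>n. (\<integral>\<^sup>+\<omega>. ennreal (real (U L n \<omega>)) \<partial>M) \<le> ennreal Bd"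
    using EU_bound[OF a, of L] by blast
  have markov: "prob {\<omega> \<in> space M. K0 < U L n \<omega>} \<le> Bd / real K0" if K0: "K0 \<ge> 1" for K0 n
  proof -
    have Sm: "{\<omega> \<in> space M. K0 < U L n \<omega>} \<in> events" by measurable
    have "ennreal (real K0) * emeasure M {\<omega> \<in> space M. K0 < U L n \<omega>}
        = (\<integral>\<^sup>+\<omega>. ennreal (real K0) * indicator {\<omega> \<in> space M. K0 < U L n \<omega>} \<omega> \<partial>M)"
      using Sm by (simp add: nn_integral_cmult_indicator)
    also have "\<dots> \<le> (\<integral>\<^sup>+\<omega>. ennreal (real (U L n \<omega>)) \<partial>M)"
      by (intro nn_integral_mono) (auto simp: indicator_def intro!: ennreal_leI)
    also have "\<dots> \<le> ennreal Bd" by (rule Bd(2))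
    finally have "ennreal (real K0 * prob {\<omega> \<in> space M. K0 < U L n \<omega>}) \<le> ennreal Bd"
      by (simp add: emeasure_eq_measure ennreal_mult)
    hence "real K0 * prob {\<omega> \<in> space M. K0 < U L n \<omega>} \<le> Bd" using Bd(1) by (simp add: ennreal_le_iff)
    thus ?thesis using K0 by (simp add: field_simps)
  qed
  define z where "z n = prob {\<omega> \<in> space M. U L n \<omega> = 0}" for n
  define b where "b K0 n = prob {\<omega> \<in> space M. 1 \<le> U L n \<omega> \<and> U L n \<omega> \<le> K0}" for K0 n
  have b0: "b K0 \<longlonglongrightarrow> 0" if K0: "K0 \<ge> 1" for K0
  proof -
    define q where "q = p0 ^ K0"
    have q: "q > 0" using p0 by (simp add: q_def)
    have tel: "q * (\<Sum>i<N. b K0 i) \<le> z N - z 0" for N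
    proof (induction N)
      case 0 thus ?case by simp
    next
      case (Suc N)
      have "z (Suc N) \<ge> z N + q * b K0 N" using step_zero[OF K0, of L N] by (simp add: z_def b_def q_def)
      thus ?case using Suc.IH by (simp add: algebra_simps)
    qed
    have "(\<Sum>i<N. b K0 i) \<le> 1 / q" for N
    proof -
      have "z N \<le> 1" "z 0 \<ge> 0" by (simp_all add: z_def)
      hence "z N - z 0 \<le> 1" by linarith
      hence "q * (\<Sum>i<N. b K0 i) \<le> 1" using tel[of N] by linarith
      thus ?thesis using q by (simp add: field_simps)
    qed
    hence "summable (b K0)" by (intro summableI_nonneg_bounded[of _ "1/q"]) (auto simp: b_def)
    thus ?thesis by (rule summable_LIMSEQ_zero)
  qed
  have sub_ext: "{\<omega> \<in> space M. U L n \<omega> = 0} \<subseteq> ext L" for n by (auto simp: ext_def ext_iff)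
  show ?thesis
  proof (rule ccontr)
    assume ne: "prob (ext L) \<noteq> 1"
    have le1: "prob (ext L) \<le> 1" by simp
    define \<epsilon> where "\<epsilon> = 1 - prob (ext L)"
    have "prob (ext L) < 1" using ne le1 by linarith
    hence \<epsilon>: "\<epsilon> > 0" by (simp add: \<epsilon>_def)
    define K0 where "K0 = nat \<lceil>2 * Bd / \<epsilon>\<rceil> + 1"
    have K01: "K0 \<ge> 1" by (simp add: K0_def)
    have "real K0 > 2 * Bd / \<epsilon>" unfolding K0_def by linarith
    hence BK: "Bd / real K0 < \<epsilon> / 2" using \<epsilon> Bd(1) K01 by (simp add: field_simps)
    obtain n where "norm (b K0 n - 0) < \<epsilon> / 2"
      using LIMSEQ_D[OF b0[OF K01], of "\<epsilon> / 2"] \<epsilon> by auto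
    hence bn: "b K0 n < \<epsilon> / 2" by simp
    have S1: "{\<omega> \<in> space M. 1 \<le> U L n \<omega>} \<subseteq> {\<omega> \<in> space M. 1 \<le> U L n \<omega> \<and> U L n \<omega> \<le> K0} \<union> {\<omega> \<in> space M. K0 < U L n \<omega>}"
      by auto
    have "prob {\<omega> \<in> space M. 1 \<le> U L n \<omega>} \<le> prob ({\<omega> \<in> space M. 1 \<le> U L n \<omega> \<and> U L n \<omega> \<le> K0} \<union> {\<omega> \<in> space M. K0 < U L n \<omega>})"
      by (intro finite_measure_mono[OF S1]) measurable
    also have "\<dots> \<le> b K0 n + prob {\<omega> \<in> space M. K0 < U L n \<omega>}"
      unfolding b_def by (intro measure_Un_le) measurable
    also have "\<dots> < \<epsilon>" using bn markov[OF K01, of n] BK by linarith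
    finally have p1: "prob {\<omega> \<in> space M. 1 \<le> U L n \<omega>} < \<epsilon>" .
    have se: "space M - {\<omega> \<in> space M. U L n \<omega> = 0} = {\<omega> \<in> space M. 1 \<le> U L n \<omega>}" by auto
    have Zm: "{\<omega> \<in> space M. U L n \<omega> = 0} \<in> events" by measurable
    have "prob {\<omega> \<in> space M. U L n \<omega> = 0} = 1 - prob {\<omega> \<in> space M. 1 \<le> U L n \<omega>}"
      using prob_compl[OF Zm] unfolding se by linarith
    moreover have "prob {\<omega> \<in> space M. U L n \<omega> = 0} \<le> prob (ext L)"
      by (intro finite_measure_mono[OF sub_ext] ext_sets')
    ultimately show False using p1 by (simp add: \<epsilon>_def)
  qed
qed

end

theorem mainTheorem9:
  fixes M :: "'a measure"
    and D :: "nat \<Rightarrow> nat \<Rightarrow> 'a \<Rightarrow> nat"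
    and X R :: "nat \<Rightarrow> nat \<Rightarrow> 'a \<Rightarrow> real"
  assumes P: "prob_space M"
    and D_meas: "\<And>n k. D n k \<in> measurable M (count_space UNIV)"
    and X_meas: "\<And>n k. X n k \<in> borel_measurable M"
    and R_meas: "\<And>n k. R n k \<in> borel_measurable M"
    \<comment> \<open>mutual independence of all D_n^k, X_n^k, R_n^k (n \<ge> 0, k \<ge> 1)\<close>
    and indep: "prob_space.indep_vars M (\<lambda>_. borel)
         (\<lambda>i \<omega>. case i of Inl (n, k) \<Rightarrow> real (D n k \<omega>)
                       | Inr (Inl (n, k)) \<Rightarrow> X n k \<omega>
                       | Inr (Inr (n, k)) \<Rightarrow> R n k \<omega>)
         (Inl ` {(n, k). k \<ge> 1} \<union> Inr ` Inl ` {(n, k). k \<ge> 1} \<union> Inr ` Inr ` {(n, k). k \<ge> 1})"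
    \<comment> \<open>identical distributions within each array\<close>
    and D_id: "\<And>n k. k \<ge> 1 \<Longrightarrow> distr M (count_space UNIV) (D n k) = distr M (count_space UNIV) (D 0 1)"
    and X_id: "\<And>n k. k \<ge> 1 \<Longrightarrow> distr M borel (X n k) = distr M borel (X 0 1)"
    and R_id: "\<And>n k. k \<ge> 1 \<Longrightarrow> distr M borel (R n k) = distr M borel (R 0 1)"
    and X_nonneg: "\<And>n k \<omega>. \<omega> \<in> space M \<Longrightarrow> X n k \<omega> \<ge> 0"
    and R_nonneg: "\<And>n k \<omega>. \<omega> \<in> space M \<Longrightarrow> R n k \<omega> \<ge> 0"
    \<comment> \<open>continuous distribution function F of X\<close>
    and F_cont: "\<And>x. isCont (\<lambda>y. measure M {\<omega> \<in> space M. X 0 1 \<omega> \<le> y}) x"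
    \<comment> \<open>(A1)\<close>
    and D_int: "integrable M (\<lambda>\<omega>. real (D 0 1 \<omega>))"
    and m_gt1: "integral\<^sup>L M (\<lambda>\<omega>. real (D 0 1 \<omega>)) > 1"
    and R_int: "integrable M (R 0 1)"
    and X_int: "integrable M (X 0 1)"
    and mu_pos: "integral\<^sup>L M (X 0 1) > 0"
    \<comment> \<open>(A2)\<close>
    and p0: "measure M {\<omega> \<in> space M. D 0 1 \<omega> = 0} > 0"
    and pk: "\<exists>k\<ge>2. measure M {\<omega> \<in> space M. D 0 1 \<omega> = k} > 0"
    \<comment> \<open>(A3) for the fcfs-process started at 1\<close>
    and irred: "\<And>j. j \<ge> 1 \<Longrightarrow> \<exists>n. measure M {\<omega> \<in> space M. fcfs_proc D X R 1 n \<omega> = j} > 0"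
    \<comment> \<open>(A4)\<close>
    and D_sq: "integrable M (\<lambda>\<omega>. (real (D 0 1 \<omega>))\<^sup>2)"
    and X_sq: "integrable M (\<lambda>\<omega>. (X 0 1 \<omega>)\<^sup>2)"
    and R_sq: "integrable M (\<lambda>\<omega>. (R 0 1 \<omega>)\<^sup>2)"
  shows "(integral\<^sup>L M (R 0 1) < integral\<^sup>L M (X 0 1) \<longrightarrow> fcfs_ext_prob M D X R 1 = 1)
       \<and> (integral\<^sup>L M (R 0 1) > integral\<^sup>L M (X 0 1) \<longrightarrow>
            fcfs_ext_prob M D X R 1 < 1 \<and> (\<lambda>L. fcfs_ext_prob M D X R L) \<longlonglongrightarrow> 0)"
proof -
  interpret fcfs M D X R
    using P D_meas X_meas R_meas indep D_id X_id R_id X_nonneg R_nonneg D_int R_int X_int D_sq X_sq R_sq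
    by (intro fcfs.intro fcfs_axioms.intro) assumption+
  have e: "fcfs_ext_prob M D X R L = prob (ext L)" for L
    by (simp add: fcfs_ext_prob_def ext_def)
  show ?thesis
  proof (intro conjI impI)
    assume "integral\<^sup>L M (R 0 1) < integral\<^sup>L M (X 0 1)"
    thus "fcfs_ext_prob M D X R 1 = 1" unfolding e by (intro parta p0)
  next
    assume "integral\<^sup>L M (R 0 1) > integral\<^sup>L M (X 0 1)"
    hence "prob (ext 1) < 1 \<and> (\<lambda>L. prob (ext L)) \<longlonglongrightarrow> 0"
      by (intro partb m_gt1 mu_pos irred)
    thus "fcfs_ext_prob M D X R 1 < 1" "(\<lambda>L. fcfs_ext_prob M D X R L) \<longlonglongrightarrow> 0"
      unfolding e by auto
  qed
qed

end
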